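(* Let $P:H_0(\tilde S_N)\to\operatorname{NDPF}^{(1)}_N$ be the monoid morphism with $P(\pi_i)=f_i$ for $i\in\{0,\dots,N-1\}$. For every $g\in \operatorname{NDPF}^{(1)}_N$, the fiber $\{w\in\tilde S_N: P(\pi_w)=g\}$ contains a unique $[321]$-avoiding affine permutation.
   Context: $\tilde S_N$ is the group of bijections $\sigma:\mathbb{Z}\to\mathbb{Z}$ with $\sigma(i+N)=\sigma(i)+N$ and $\sum_{i=1}^N\sigma(i)=\binom{N+1}{2}$, generated by $s_0,\dots,s_{N-1}$ where $s_i$ exchanges $j,j+1$ for all $j\equiv i\pmod N$ (indices mod $N$). $H_0(\tilde S_N)$ is generated by $\pi_i$, $i\in\mathbb{Z}/N$, with $\pi_i^2=\pi_i$, $\pi_i\pi_j=\pi_j\pi_i$ for $i,j$ non-adjacent mod $N$, and $\pi_i\pi_{i+1}\pi_i=\pi_{i+1}\pi_i\pi_{i+1}$; $\pi_w=\pi_{i_1}\cdots\pi_{i_k}$ for a reduced word $w=s_{i_1}\cdots s_{i_k}$, a bijection with $\tilde S_N$. An affine permutation $x$ is $[321]$-avoiding if there are no integers $a<b<c$ with $x(a)>x(b)>x(c)$. $\operatorname{NDPF}^{(1)}_N$ is the set of $f:\mathbb{Z}\to\mathbb{Z}$ that are regressive ($f(i)\le i$), order preserving and skew periodic ($f(i+N)=f(i)+N$), other than the shifts $i\mapsto i-t$ with $t\ne0$; functions act on the right, so $j.(fg)=(j.f).g$ (apply $f$ first). For $i\in\{0,\dots,N-1\}$, $f_i$ is the function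 with $f_i(j)=j-1$ if $j\equiv i+1\pmod N$ and $f_i(j)=j$ otherwise. *)

theory Defs
  imports Main
begin

definition affS :: "nat \<Rightarrow> (int \<Rightarrow> int) set" where
  "affS N = {\<sigma>. bij \<sigma> \<and> (\<forall>i. \<sigma> (i + int N) = \<sigma> i + int N)
                 \<and> (\<Sum>i=1..int N. \<sigma> i) = int N * (int N + 1) div 2}"

definition s_gen :: "nat \<Rightarrow> nat \<Rightarrow> int \<Rightarrow> int" where
  "s_gen N i j = (if j mod int N = int i mod int N then j + 1
                  else if j mod int N = (int i + 1) mod int N then j - 1 else j)"

definition word_perm :: "nat \<Rightarrow> nat list \<Rightarrow> int \<Rightarrow> int" where
  "word_perm N ws = foldr (\<lambda>i acc. s_gen N i \<circ> acc) ws id"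

definition aff_length :: "nat \<Rightarrow> (int \<Rightarrow> int) \<Rightarrow> nat" where
  "aff_length N w = (LEAST k. \<exists>ws. length ws = k \<and> set ws \<subseteq> {..<N} \<and> word_perm N ws = w)"

definition reduced_word :: "nat \<Rightarrow> (int \<Rightarrow> int) \<Rightarrow> nat list \<Rightarrow> bool" where
  "reduced_word N w ws \<longleftrightarrow> set ws \<subseteq> {..<N} \<and> word_perm N ws = w \<and> length ws = aff_length N w"

definition avoids321 :: "(int \<Rightarrow> int) \<Rightarrow> bool" where
  "avoids321 x \<longleftrightarrow> \<not> (\<exists>a b c. a < b \<and> b < c \<and> x a > x b \<and> x b > x c)"

definition f_gen :: "nat \<Rightarrow> nat \<Rightarrow> int \<Rightarrow> int" where
  "f_gen N i j = (if j mod int N = (int i + 1) mod int N then j - 1 else j)"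

definition NDPF1 :: "nat \<Rightarrow> (int \<Rightarrow> int) set" where
  "NDPF1 N = {f. (\<forall>i. f i \<le> i) \<and> mono f \<and> (\<forall>i. f (i + int N) = f i + int N)
                 \<and> \<not> (\<exists>t. t \<noteq> 0 \<and> f = (\<lambda>i. i - t))}"

text \<open>Product f_{i1} ... f_{ik} with functions acting on the right
  (j.(fg) = (j.f).g), i.e. f_{i1} is applied first.\<close>
definition word_f :: "nat \<Rightarrow> nat list \<Rightarrow> int \<Rightarrow> int" where
  "word_f N ws = foldl (\<lambda>acc i. f_gen N i \<circ> acc) id ws"

definition P_hecke :: "nat \<Rightarrow> (int \<Rightarrow> int) \<Rightarrow> int \<Rightarrow> int" where
  "P_hecke N w = word_f N (SOME ws. reduced_word N w ws)"

end

theory Submission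
  imports Defs
begin

definition per :: "nat \<Rightarrow> (int \<Rightarrow> int) \<Rightarrow> bool" where
  "per N w \<longleftrightarrow> (\<forall>i. w (i + int N) = w i + int N)"

lemma per_mult:
  assumes "per N w" shows "w (i + t * int N) = w i + t * int N"
proof -
  have nat_case: "\<And>i. w (i + int k * int N) = w i + int k * int N" for k :: nat
  proof (induction k)
    case 0 then show ?case by simp
  next
    case (Suc k)
    have "w (i + int (Suc k) * int N) = w ((i + int k * int N) + int N)" by (simp add: algebra_simps)
    also have "\<dots> = w i + int k * int N + int N" using assms Suc[of i] unfolding per_def by simp
    finally show ?case by (simp add: algebra_simps)
  qed
  show ?thesis
  proof (cases "t \<ge> 0")
    case True then show ?thesis using nat_case[of i "nat t"] by simp
  next
    case False
    define k where "k = nat (- t)"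
    have k: "t = - int k" using False unfolding k_def by simp
    have "w ((i - int k * int N) + int k * int N) = w (i - int k * int N) + int k * int N"
      by (rule nat_case)
    then show ?thesis using k by (simp add: algebra_simps)
  qed
qed

lemma s_gen_alt:
  assumes "i < N"
  shows "s_gen N i j = (if int N dvd (j - int i) then j + 1
                        else if int N dvd (j - int i - 1) then j - 1 else j)"
proof -
  have "int i mod int N = int i" using assms by simp
  have e1: "(j mod int N = int i mod int N) = (int N dvd (j - int i))" by (rule mod_eq_dvd_iff)
  have e2: "(j mod int N = (int i + 1) mod int N) = (int N dvd (j - (int i + 1)))" by (rule mod_eq_dvd_iff)
  show ?thesis unfolding s_gen_def using e1 e2 by (simp add: algebra_simps)
qed

lemma dvd_two_bad:
  assumes "N \<ge> 2" "int N dvd x" "int N dvd (x - 1)" shows False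
proof -
  have "int N dvd x - (x - 1)" using assms(2,3) by (rule dvd_diff)
  then have "int N dvd 1" by simp
  then show False using assms(1) by simp
qed

lemma dvd_two_bad':
  assumes "N \<ge> 2" "int N dvd x" "int N dvd (x + 1)" shows False
  using dvd_two_bad[OF assms(1) assms(3)] assms(2) by simp

lemma s_gen_per: "i < N \<Longrightarrow> per N (s_gen N i)"
  unfolding per_def
proof
  fix j assume "i < N"
  have a: "(int N dvd (j + int N - int i)) = (int N dvd (j - int i))"
    using dvd_add_left_iff[of "int N" "int N" "j - int i"] by (simp add: algebra_simps)
  have b: "(int N dvd (j + int N - int i - 1)) = (int N dvd (j - int i - 1))"
    using dvd_add_left_iff[of "int N" "int N" "j - int i - 1"] by (simp add: algebra_simps)
  show "s_gen N i (j + int N) = s_gen N i j + int N"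
    unfolding s_gen_alt[OF \<open>i<N\<close>] a b by simp
qed

lemma s_gen_invol: assumes "N \<ge> 2" "i < N" shows "s_gen N i (s_gen N i j) = j"
proof -
  note s = s_gen_alt[OF assms(2)]
  show ?thesis
  proof (cases "int N dvd (j - int i)")
    case True
    have e: "j + 1 - int i = (j - int i) + 1" by simp
    have "\<not> int N dvd (j + 1 - int i)" unfolding e using dvd_two_bad'[OF assms(1), of "j - int i"] True by blast
    then show ?thesis using True by (simp add: s)
  next
    case F1: False
    show ?thesis
    proof (cases "int N dvd (j - int i - 1)")
      case True
      have e2: "j - 1 - int i = j - int i - 1" by simp
      show ?thesis using F1 True by (simp add: s e2)
    next
      case False then show ?thesis using F1 by (simp add: s)
    qed
  qed
qed

lemma s_gen_bij: assumes "N \<ge> 2" "i < N" shows "bij (s_gen N i)"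
  by (rule o_bij[of "s_gen N i"]) (auto simp: s_gen_invol[OF assms] fun_eq_iff)

lemma s_gen_le: "i < N \<Longrightarrow> s_gen N i j \<le> j + 1"
  by (simp add: s_gen_alt)
lemma s_gen_ge: "i < N \<Longrightarrow> s_gen N i j \<ge> j - 1"
  by (simp add: s_gen_alt)
lemma s_gen_nd: "i < N \<Longrightarrow> \<not> int N dvd (j - int i) \<Longrightarrow> s_gen N i j \<le> j"
  by (simp add: s_gen_alt)
lemma s_gen_nd2: "i < N \<Longrightarrow> \<not> int N dvd (j - int i - 1) \<Longrightarrow> s_gen N i j \<ge> j"
  by (simp add: s_gen_alt)

lemma s_gen_order:
  assumes "N \<ge> 2" "i < N" "a < b" "s_gen N i b < s_gen N i a"
  shows "int N dvd (a - int i) \<and> b = a + 1"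
proof -
  have "b - 1 \<le> s_gen N i b" "s_gen N i a \<le> a + 1" using s_gen_le s_gen_ge assms(2) by auto
  then have b: "b = a + 1" using assms(3,4) by linarith
  show ?thesis
  proof (rule ccontr)
    assume "\<not> ?thesis"
    then have nd: "\<not> int N dvd (a - int i)" using b by simp
    have "s_gen N i a \<le> a" using s_gen_nd[OF assms(2) nd] .
    moreover have "\<not> int N dvd (b - int i - 1)" using nd b by simp
    then have "s_gen N i b \<ge> b" by (rule s_gen_nd2[OF assms(2)])
    ultimately show False using assms(4) b by linarith
  qed
qed

lemma per_bound:
  assumes "per N w" "N > 0"
  shows "\<exists>C. \<forall>x. \<bar>w x - x\<bar> \<le> C"
proof -
  define C where "C = Max ((\<lambda>r. \<bar>w r - r\<bar>) ` {0..<int N})"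
  have fin: "finite ((\<lambda>r. \<bar>w r - r\<bar>) ` {0..<int N})" by simp
  show ?thesis
  proof (intro exI allI)
    fix x
    define r where "r = x mod int N"
    define t where "t = x div int N"
    have x: "x = r + t * int N" unfolding r_def t_def by simp
    have r: "r \<in> {0..<int N}" unfolding r_def using assms(2) by simp
    have "w x = w r + t * int N" unfolding x by (rule per_mult[OF assms(1)])
    then have "\<bar>w x - x\<bar> = \<bar>w r - r\<bar>" using x by simp
    also have "\<dots> \<le> C" unfolding C_def using fin r by (intro Max_ge) auto
    finally show "\<bar>w x - x\<bar> \<le> C" .
  qed
qed

definition invs :: "nat \<Rightarrow> (int \<Rightarrow> int) \<Rightarrow> int \<Rightarrow> (int \<times> int) set" where
  "invs N w m = {(a,b). m < a \<and> a \<le> m + int N \<and> a < b \<and> w b < w a}"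

definition invn :: "nat \<Rightarrow> (int \<Rightarrow> int) \<Rightarrow> nat" where
  "invn N w = card (invs N w 0)"

lemma invs_finite:
  assumes "per N w" "N > 0"
  shows "finite (invs N w m)"
proof -
  obtain C where C: "\<And>x. \<bar>w x - x\<bar> \<le> C" using per_bound[OF assms] by blast
  have "invs N w m \<subseteq> {m<..m + int N} \<times> {m..m + int N + 2*C}"
  proof
    fix p assume "p \<in> invs N w m"
    then obtain a b where p: "p = (a,b)" "m < a" "a \<le> m + int N" "a < b" "w b < w a"
      unfolding invs_def by auto
    have "\<bar>w a - a\<bar> \<le> C" "\<bar>w b - b\<bar> \<le> C" using C by auto
    then have "b \<le> m + int N + 2*C" using p by linarith
    then show "p \<in> {m<..m + int N} \<times> {m..m + int N + 2*C}" using p by auto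
  qed
  then show ?thesis by (rule finite_subset) simp
qed

lemma invs_shift:
  assumes "per N w" "N > 0"
  shows "card (invs N w (m+1)) = card (invs N w m)"
proof -
  define A1 where "A1 = {p \<in> invs N w m. fst p = m + 1}"
  define A2 where "A2 = {p \<in> invs N w m. fst p \<noteq> m + 1}"
  define A3 where "A3 = {p \<in> invs N w (m+1). fst p = m + 1 + int N}"
  have f1: "finite (invs N w m)" "finite (invs N w (m+1))" using invs_finite[OF assms] by auto
  have u1: "invs N w m = A1 \<union> A2" "A1 \<inter> A2 = {}" unfolding A1_def A2_def by auto
  have u2: "invs N w (m+1) = A2 \<union> A3" "A2 \<inter> A3 = {}"
    unfolding A2_def A3_def invs_def by auto
  have per: "\<And>x. w (x + int N) = w x + int N" using assms(1) unfolding per_def by auto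
  have A3: "A3 = (\<lambda>(a,b). (a + int N, b + int N)) ` A1"
  proof (rule set_eqI, rule iffI)
    fix p assume "p \<in> A3"
    then obtain a b where p: "p = (a,b)" "a = m + 1 + int N" "a < b" "w b < w a"
      unfolding A3_def invs_def by auto
    have "w (b - int N) < w (a - int N)" using per[of "b - int N"] per[of "a - int N"] p by simp
    then have "(a - int N, b - int N) \<in> A1" using p assms(2) unfolding A1_def invs_def by auto
    then show "p \<in> (\<lambda>(a,b). (a + int N, b + int N)) ` A1" using p by force
  next
    fix p assume "p \<in> (\<lambda>(a,b). (a + int N, b + int N)) ` A1"
    then obtain a b where p: "p = (a + int N, b + int N)" "(a,b) \<in> A1" by auto
    then show "p \<in> A3" using per[of a] per[of b] unfolding A1_def A3_def invs_def by auto
  qed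
  have inj: "inj_on (\<lambda>(a,b). (a + int N, b + int N)) A1" by (auto simp: inj_on_def)
  have "card A3 = card A1" unfolding A3 by (rule card_image[OF inj])
  moreover have "finite A1" "finite A2" "finite A3" using f1 u1 u2 by auto
  moreover have "card (A2 \<union> A3) = card A2 + card A3" using card_Un_disjoint \<open>finite A2\<close> \<open>finite A3\<close> u2(2) by blast
  moreover have "card (A1 \<union> A2) = card A1 + card A2" using card_Un_disjoint \<open>finite A1\<close> \<open>finite A2\<close> u1(2) by blast
  ultimately show ?thesis using u1 u2 by simp
qed

lemma invs_any:
  assumes "per N w" "N > 0"
  shows "card (invs N w m) = invn N w"
  unfolding invn_def
proof (induction m rule: int_induct[where k = 0])
  case base then show ?case by simp
next
  case (step1 i) then show ?case using invs_shift[OF assms, of i] by simp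
next
  case (step2 i) then show ?case using invs_shift[OF assms, of "i - 1"] by simp
qed

lemma window_dvd:
  assumes "int N dvd x" "0 \<le> x" "x < int N" shows "x = 0"
  using zdvd_not_zless[of x "int N"] assms by force

lemma invn_step:
  assumes N: "N \<ge> 2" and i: "i < N" and pw: "per N w" and inj: "inj w"
  shows "int (invn N (w \<circ> s_gen N i)) = int (invn N w) + (if w (int i) < w (int i + 1) then 1 else -1)"
proof -
  let ?s = "s_gen N i"
  define m where "m = int i - 1"
  define X where "X = invs N w m"
  define X' where "X' = invs N (w \<circ> ?s) m"
  define p0 where "p0 = (int i, int i + 1)"
  define sp where "sp = (\<lambda>(a::int,b::int). (?s a, ?s b))"
  have N0: "N > 0" using N by simp
  have pw': "per N (w \<circ> ?s)" using pw s_gen_per[OF i] unfolding per_def by simp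
  have fX: "finite X" "finite X'" unfolding X_def X'_def using invs_finite[OF pw N0] invs_finite[OF pw' N0] by auto
  have sinv: "\<And>x. ?s (?s x) = x" using s_gen_invol[OF N i] .
  have si: "?s (int i) = int i + 1" by (simp add: s_gen_alt[OF i])
  have si1: "?s (int i + 1) = int i"
  proof -
    have "\<not> int N dvd 1" using N by simp
    then show ?thesis by (simp add: s_gen_alt[OF i])
  qed
  have win: "\<And>a. m < a \<Longrightarrow> a \<le> m + int N \<Longrightarrow> m < ?s a \<and> ?s a \<le> m + int N"
  proof -
    fix a assume a: "m < a" "a \<le> m + int N"
    show "m < ?s a \<and> ?s a \<le> m + int N"
    proof (cases "int N dvd (a - int i)")
      case True
      then have "a - int i = 0" using window_dvd[where x="a - int i"] a unfolding m_def by simp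
      then show ?thesis using si N unfolding m_def by simp
    next
      case F: False
      show ?thesis
      proof (cases "int N dvd (a - int i - 1)")
        case True
        have "a - int i - 1 = 0 \<or> a - int i - 1 = -1" using window_dvd[where x="a - int i - 1"] a True unfolding m_def
          by (cases "a - int i - 1 \<ge> 0") auto
        then show ?thesis using F N unfolding m_def by (auto simp: s_gen_alt[OF i])
      next
        case False then show ?thesis using F a by (simp add: s_gen_alt[OF i])
      qed
    qed
  qed
  have ord: "\<And>a b. m < a \<Longrightarrow> a \<le> m + int N \<Longrightarrow> a < b \<Longrightarrow> ?s b < ?s a \<Longrightarrow> (a,b) = p0"
  proof -
    fix a b assume a: "m < a" "a \<le> m + int N" "a < b" "?s b < ?s a"
    from s_gen_order[OF N i a(3,4)] have "int N dvd (a - int i)" "b = a + 1" by auto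
    moreover then have "a - int i = 0" using window_dvd[where x="a - int i"] a unfolding m_def by simp
    ultimately show "(a,b) = p0" unfolding p0_def by simp
  qed
  have key: "X' - {p0} = sp ` (X - {p0})"
  proof (rule set_eqI, rule iffI)
    fix p assume p: "p \<in> X' - {p0}"
    then obtain a b where ab: "p = (a,b)" "m < a" "a \<le> m + int N" "a < b" "w (?s b) < w (?s a)"
      unfolding X'_def invs_def by auto
    have "\<not> ?s b < ?s a" using ord[OF ab(2,3,4)] p ab(1) by auto
    moreover have "?s b \<noteq> ?s a" using ab(4) sinv by (metis less_irrefl)
    ultimately have lt: "?s a < ?s b" by linarith
    have "(?s a, ?s b) \<noteq> p0"
    proof
      assume "(?s a, ?s b) = p0"
      then have e: "?s a = int i" "?s b = int i + 1" unfolding p0_def by auto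
      have "a = int i + 1" using sinv[of a] si e(1) by simp
      moreover have "b = int i" using sinv[of b] si1 e(2) by simp
      ultimately show False using ab(4) by simp
    qed
    then have "(?s a, ?s b) \<in> X - {p0}" using win[OF ab(2,3)] lt ab(5) unfolding X_def invs_def by auto
    moreover have "p = sp (?s a, ?s b)" unfolding sp_def using ab(1) sinv by simp
    ultimately show "p \<in> sp ` (X - {p0})" by blast
  next
    fix p assume "p \<in> sp ` (X - {p0})"
    then obtain a b where ab: "p = sp (a,b)" "(a,b) \<in> X" "(a,b) \<noteq> p0" by auto
    from ab(2) have ab2: "m < a" "a \<le> m + int N" "a < b" "w b < w a" unfolding X_def invs_def by auto
    have "\<not> ?s b < ?s a" using ord[OF ab2(1,2,3)] ab(3) by auto
    moreover have "?s b \<noteq> ?s a" using ab2(3) sinv by (metis less_irrefl)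
    ultimately have lt: "?s a < ?s b" by linarith
    have "(?s a, ?s b) \<noteq> p0"
    proof
      assume "(?s a, ?s b) = p0"
      then have e: "?s a = int i" "?s b = int i + 1" unfolding p0_def by auto
      have "a = int i + 1" using sinv[of a] si e(1) by simp
      moreover have "b = int i" using sinv[of b] si1 e(2) by simp
      ultimately show False using ab2(3) by simp
    qed
    then show "p \<in> X' - {p0}" using win[OF ab2(1,2)] lt ab2(4) ab(1) sinv unfolding X'_def invs_def sp_def by auto
  qed
  have injs: "inj ?s" using s_gen_bij[OF N i] bij_is_inj by blast
  have injsp: "inj_on sp (X - {p0})" unfolding sp_def inj_on_def by (auto simp: inj_eq[OF injs])
  have c1: "card (X' - {p0}) = card (X - {p0})" unfolding key by (rule card_image[OF injsp])
  have p0w: "m < int i" "int i \<le> m + int N" using N unfolding m_def by auto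
  have inX': "p0 \<in> X' \<longleftrightarrow> w (int i) < w (int i + 1)" unfolding X'_def invs_def p0_def using p0w si si1 by auto
  have inX: "p0 \<in> X \<longleftrightarrow> w (int i + 1) < w (int i)" unfolding X_def invs_def p0_def using p0w by auto
  have ne: "w (int i) \<noteq> w (int i + 1)" using inj by (metis add_cancel_left_right inj_eq one_neq_zero)
  have cX: "card X = card (X - {p0}) + (if p0 \<in> X then 1 else 0)"
  proof (cases "p0 \<in> X")
    case True
    have "Suc (card (X - {p0})) = card X" by (rule card_Suc_Diff1[OF fX(1) True])
    moreover have "(if p0 \<in> X then 1 else 0) = (1::nat)" using True by simp
    ultimately show ?thesis by linarith
  qed simp
  have cX': "card X' = card (X' - {p0}) + (if p0 \<in> X' then 1 else 0)"
  proof (cases "p0 \<in> X'")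
    case True
    have "Suc (card (X' - {p0})) = card X'" by (rule card_Suc_Diff1[OF fX(2) True])
    moreover have "(if p0 \<in> X' then 1 else 0) = (1::nat)" using True by simp
    ultimately show ?thesis by linarith
  qed simp
  have "invn N w = card X" unfolding X_def using invs_any[OF pw N0] by simp
  moreover have "invn N (w \<circ> ?s) = card X'" unfolding X'_def using invs_any[OF pw' N0] by simp
  ultimately show ?thesis using cX cX' c1 inX inX' ne by auto
qed

lemma word_perm_snoc: "word_perm N (ws @ [i]) = word_perm N ws \<circ> s_gen N i"
proof -
  have g: "foldr (\<lambda>i acc. s_gen N i \<circ> acc) xs x = foldr (\<lambda>i acc. s_gen N i \<circ> acc) xs id \<circ> x" for xs x
    by (induction xs) (auto simp: comp_assoc)
  show ?thesis unfolding word_perm_def using g[of ws "s_gen N i"] by simp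
qed

lemma word_perm_nil: "word_perm N [] = id" unfolding word_perm_def by simp

lemma word_f_snoc: "word_f N (ws @ [i]) = f_gen N i \<circ> word_f N ws"
  unfolding word_f_def by simp

lemma word_f_nil: "word_f N [] = id" unfolding word_f_def by simp

lemma sum_conv: "(\<Sum>k\<in>{a..a + int n - 1}. f k) = (\<Sum>r<n. f (a + int r))"
proof -
  have e: "{a..a + int n - 1} = (\<lambda>r. a + int r) ` {..<n}"
  proof (rule set_eqI, rule iffI)
    fix k assume k: "k \<in> {a..a + int n - 1}"
    then have "nat (k - a) < n" "k = a + int (nat (k - a))" by auto
    then show "k \<in> (\<lambda>r. a + int r) ` {..<n}" by blast
  qed auto
  have "inj_on (\<lambda>r. a + int r) {..<n}" by (auto simp: inj_on_def)
  then show ?thesis unfolding e by (simp add: sum.reindex)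
qed

lemma sum_shift_per:
  fixes h :: "int \<Rightarrow> int"
  assumes "\<And>x. h (x + int N) = h x"
  shows "(\<Sum>r<N. h (m + int r)) = (\<Sum>r<N. h (int r))"
proof -
  have step: "(\<Sum>r<N. h (m + 1 + int r)) = (\<Sum>r<N. h (m + int r))" for m
  proof (cases N)
    case 0 then show ?thesis by simp
  next
    case (Suc n)
    have "(\<Sum>r<N. h (m + int r)) = h m + (\<Sum>r<n. h (m + 1 + int r))"
      unfolding Suc sum.lessThan_Suc_shift by (simp add: algebra_simps)
    moreover have "(\<Sum>r<N. h (m + 1 + int r)) = (\<Sum>r<n. h (m + 1 + int r)) + h (m + int N)"
      unfolding Suc sum.lessThan_Suc by (simp add: algebra_simps)
    moreover have "h (m + int N) = h m" using assms by simp
    ultimately show ?thesis by simp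
  qed
  show ?thesis
  proof (induction m rule: int_induct[where k = 0])
    case base then show ?case by simp
  next
    case (step1 i) then show ?case using step[of i] by simp
  next
    case (step2 i) then show ?case using step[of "i - 1"] by simp
  qed
qed

lemma gauss_int: "2 * (\<Sum>k\<in>{1..int N}. k) = int N * (int N + 1)"
proof (induction N)
  case 0 then show ?case by simp
next
  case (Suc N)
  have "{1..int (Suc N)} = insert (1 + int N) {1..int N}"
    using atLeastAtMostPlus1_int_conv[of 1 "int N"] by simp
  then have "(\<Sum>k\<in>{1..int (Suc N)}. k) = (1 + int N) + (\<Sum>k\<in>{1..int N}. k)" by simp
  then show ?case using Suc by (simp add: algebra_simps)
qed

lemma affS_alt:
  "w \<in> affS N \<longleftrightarrow> bij w \<and> per N w \<and> (\<Sum>i\<in>{1..int N}. w i - i) = 0"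
proof -
  have "(\<Sum>i\<in>{1..int N}. w i - i) = (\<Sum>i\<in>{1..int N}. w i) - (\<Sum>i\<in>{1..int N}. i)"
    by (simp add: sum_subtractf)
  moreover have "(\<Sum>i\<in>{1..int N}. i) = int N * (int N + 1) div 2" using gauss_int[of N] by simp
  ultimately show ?thesis unfolding affS_def per_def by auto
qed

lemma win_sum:
  assumes "per N w"
  shows "(\<Sum>k\<in>{a..a + int N - 1}. w k - k) = (\<Sum>k\<in>{1..int N}. w k - k)"
proof -
  have h: "\<And>x. (w (x + int N) - (x + int N)) = w x - x" using assms unfolding per_def by simp
  have "(\<Sum>k\<in>{a..a + int N - 1}. w k - k) = (\<Sum>r<N. w (a + int r) - (a + int r))" by (rule sum_conv)
  also have "\<dots> = (\<Sum>r<N. w (1 + int r) - (1 + int r))"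
    using sum_shift_per[where h="\<lambda>x. w x - x", OF h, of a] sum_shift_per[where h="\<lambda>x. w x - x", OF h, of 1] by simp
  also have "\<dots> = (\<Sum>k\<in>{1..1 + int N - 1}. w k - k)" by (rule sum_conv[symmetric])
  finally show ?thesis by simp
qed

lemma s_gen_bij_win:
  assumes N: "N \<ge> 2" and i: "i < N"
  shows "bij_betw (s_gen N i) {int i..int i + int N - 1} {int i..int i + int N - 1}"
proof -
  let ?s = "s_gen N i"
  let ?W = "{int i..int i + int N - 1}"
  have sinv: "\<And>x. ?s (?s x) = x" using s_gen_invol[OF N i] .
  have win: "\<And>a. a \<in> ?W \<Longrightarrow> ?s a \<in> ?W"
  proof -
    fix a assume a: "a \<in> ?W"
    show "?s a \<in> ?W"
    proof (cases "int N dvd (a - int i)")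
      case True
      then have "a - int i = 0" using window_dvd[where x="a - int i"] a by simp
      then show ?thesis using N by (simp add: s_gen_alt[OF i])
    next
      case F: False
      show ?thesis
      proof (cases "int N dvd (a - int i - 1)")
        case True
        have "a - int i - 1 = 0 \<or> a - int i - 1 = -1" using window_dvd[where x="a - int i - 1"] a True
          by (cases "a - int i - 1 \<ge> 0") auto
        then show ?thesis using F N a by (auto simp: s_gen_alt[OF i])
      next
        case False then show ?thesis using F a by (simp add: s_gen_alt[OF i])
      qed
    qed
  qed
  show ?thesis
    by (rule bij_betw_byWitness[where f' = ?s]) (use sinv win in auto)
qed

lemma affS_step:
  assumes N: "N \<ge> 2" and i: "i < N" and w: "w \<in> affS N"
  shows "w \<circ> s_gen N i \<in> affS N"
proof -
  let ?s = "s_gen N i"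
  let ?W = "{int i..int i + int N - 1}"
  have bw: "bij w" "per N w" "(\<Sum>k\<in>{1..int N}. w k - k) = 0" using w unfolding affS_alt by auto
  have pw': "per N (w \<circ> ?s)" using bw(2) s_gen_per[OF i] unfolding per_def by simp
  have bij: "bij (w \<circ> ?s)" using bw(1) s_gen_bij[OF N i] by (rule bij_comp[rotated])
  have B: "bij_betw ?s ?W ?W" by (rule s_gen_bij_win[OF N i])
  have "(\<Sum>k\<in>{1..int N}. (w \<circ> ?s) k - k) = (\<Sum>k\<in>?W. (w \<circ> ?s) k - k)"
    using win_sum[OF pw', of "int i"] by simp
  also have "\<dots> = (\<Sum>k\<in>?W. w (?s k)) - (\<Sum>k\<in>?W. k)" by (simp add: sum_subtractf)
  also have "(\<Sum>k\<in>?W. k) = (\<Sum>k\<in>?W. ?s k)" using sum.reindex_bij_betw[OF B, of "\<lambda>k. k"] by simp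
  also have "(\<Sum>k\<in>?W. w (?s k)) = (\<Sum>k\<in>?W. w k)" using sum.reindex_bij_betw[OF B, of w] by simp
  also have "(\<Sum>k\<in>?W. w k) - (\<Sum>k\<in>?W. ?s k) = (\<Sum>k\<in>?W. w k) - (\<Sum>k\<in>?W. k)"
    using sum.reindex_bij_betw[OF B, of "\<lambda>k. k"] by simp
  also have "\<dots> = (\<Sum>k\<in>?W. w k - k)" by (simp add: sum_subtractf)
  also have "\<dots> = 0" using win_sum[OF bw(2), of "int i"] bw(3) by simp
  finally show ?thesis unfolding affS_alt using pw' bij by simp
qed

definition HF :: "(int \<Rightarrow> int) \<Rightarrow> (int \<Rightarrow> int) \<Rightarrow> bool" where
  "HF w g \<longleftrightarrow> mono g \<and> (\<forall>p. g (w p) \<le> p) \<and> (\<forall>j. j \<le> w (g j))"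

lemma f_gen_alt: "i < N \<Longrightarrow> f_gen N i j = (if int N dvd (j - int i - 1) then j - 1 else j)"
proof -
  assume "i < N"
  have e2: "(j mod int N = (int i + 1) mod int N) = (int N dvd (j - (int i + 1)))" by (rule mod_eq_dvd_iff)
  show ?thesis unfolding f_gen_def using e2 by (simp add: algebra_simps)
qed

lemma f_gen_mono: assumes "i < N" shows "mono (f_gen N i)"
proof (rule monoI)
  fix x y :: int assume "x \<le> y"
  then show "f_gen N i x \<le> f_gen N i y"
    by (cases "x = y") (auto simp: f_gen_alt[OF assms])
qed

lemma f_gen_le: "i < N \<Longrightarrow> f_gen N i j \<le> j" by (simp add: f_gen_alt)

lemma HF_unique: assumes "HF w g1" "HF w g2" shows "g1 = g2"
proof
  fix j
  have a: "\<And>g1 g2. HF w g1 \<Longrightarrow> HF w g2 \<Longrightarrow> g1 j \<le> g2 j"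
  proof -
    fix g1 g2 assume h: "HF w g1" "HF w g2"
    have "j \<le> w (g2 j)" using h(2) unfolding HF_def by auto
    then have "g1 j \<le> g1 (w (g2 j))" using h(1) unfolding HF_def by (auto dest: monoD)
    also have "\<dots> \<le> g2 j" using h(1) unfolding HF_def by auto
    finally show "g1 j \<le> g2 j" .
  qed
  show "g1 j = g2 j" using a[OF assms] a[OF assms(2,1)] by simp
qed

lemma HF_id: "HF id id" unfolding HF_def by (simp add: mono_def)

lemma asc_all:
  assumes "per N w" "w (int i) < w (int i + 1)" "int N dvd (c - int i)"
  shows "w c < w (c + 1)"
proof -
  obtain t where t: "c - int i = int N * t" using assms(3) by (auto elim: dvdE)
  have c: "c = int i + t * int N" "c + 1 = (int i + 1) + t * int N" using t by (simp_all add: algebra_simps)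
  have "w c = w (int i) + t * int N" unfolding c(1) by (rule per_mult[OF assms(1)])
  moreover have "w (c + 1) = w (int i + 1) + t * int N" unfolding c(2) by (rule per_mult[OF assms(1)])
  ultimately show ?thesis using assms(2) by simp
qed

lemma HF_step:
  assumes N: "N \<ge> 2" and i: "i < N" and pw: "per N w" and asc: "w (int i) < w (int i + 1)"
    and H: "HF w g"
  shows "HF (w \<circ> s_gen N i) (f_gen N i \<circ> g)"
proof -
  let ?s = "s_gen N i" and ?f = "f_gen N i"
  have gm: "mono g" and g1: "\<And>p. g (w p) \<le> p" and g2: "\<And>j. j \<le> w (g j)" using H unfolding HF_def by auto
  have m: "mono (?f \<circ> g)" using gm f_gen_mono[OF i] by (simp add: mono_def)
  have p1: "?f (g (w (?s p))) \<le> p" for p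
  proof (cases "int N dvd (p - int i)")
    case True
    then have sp: "?s p = p + 1" by (simp add: s_gen_alt[OF i])
    have le: "g (w (p + 1)) \<le> p + 1" by (rule g1)
    show ?thesis
    proof (cases "g (w (p + 1)) = p + 1")
      case True
      have "int N dvd (p + 1 - int i - 1)" using \<open>int N dvd (p - int i)\<close> by simp
      then show ?thesis using True sp by (simp add: f_gen_alt[OF i])
    next
      case False
      then show ?thesis using le sp f_gen_le[OF i, of "g (w (p+1))"] by simp
    qed
  next
    case F: False
    have "?s p \<le> p" using s_gen_nd[OF i F] .
    then have "g (w (?s p)) \<le> p" using g1[of "?s p"] by simp
    then show ?thesis using f_gen_le[OF i, of "g (w (?s p))"] by simp
  qed
  have p2: "j \<le> w (?s (?f (g j)))" for j
  proof -
    let ?p = "g j"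
    have j: "j \<le> w ?p" by (rule g2)
    show ?thesis
    proof (cases "int N dvd (?p - int i - 1)")
      case True
      then have fp: "?f ?p = ?p - 1" by (simp add: f_gen_alt[OF i])
      have "int N dvd (?p - 1 - int i)" using True by (simp add: algebra_simps)
      then have "?s (?p - 1) = ?p" by (simp add: s_gen_alt[OF i])
      then show ?thesis using fp j by simp
    next
      case F: False
      then have fp: "?f ?p = ?p" by (simp add: f_gen_alt[OF i])
      show ?thesis
      proof (cases "int N dvd (?p - int i)")
        case True
        then have "?s ?p = ?p + 1" by (simp add: s_gen_alt[OF i])
        moreover have "w ?p < w (?p + 1)" by (rule asc_all[OF pw asc True])
        ultimately show ?thesis using fp j by simp
      next
        case False
        then have "?s ?p = ?p" using F by (simp add: s_gen_alt[OF i])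
        then show ?thesis using fp j by simp
      qed
    qed
  qed
  show ?thesis unfolding HF_def using m p1 p2 by simp
qed

lemma no_inv_mono:
  assumes N: "N \<ge> 2" and pw: "per N w" and z: "invn N w = 0" and ab: "a < b"
  shows "w a \<le> w b"
proof (rule ccontr)
  assume "\<not> w a \<le> w b"
  then have lt: "w b < w a" by simp
  have N0: "N > 0" using N by simp
  have e: "invs N w 0 = {}" using z invs_finite[OF pw N0, of 0] unfolding invn_def by simp
  define t where "t = (a - 1) div int N"
  define r where "r = (a - 1) mod int N + 1"
  have a: "a = r + t * int N" unfolding r_def t_def by simp
  have r: "0 < r" "r \<le> int N" unfolding r_def using N0 by (simp_all add: pos_mod_bound add1_zle_eq pos_mod_sign)
  have "w a = w r + t * int N" unfolding a by (rule per_mult[OF pw])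
  moreover have "w b = w (b - t * int N) + t * int N" using per_mult[OF pw, of "b - t * int N" t] by simp
  ultimately have "w (b - t * int N) < w r" using lt by simp
  moreover have "r < b - t * int N" using ab a by simp
  ultimately have "(r, b - t * int N) \<in> invs N w 0" using r unfolding invs_def by simp
  then show False using e by simp
qed

lemma inv0_id:
  assumes N: "N \<ge> 2" and w: "w \<in> affS N" and z: "invn N w = 0"
  shows "w = id"
proof -
  have bw: "bij w" "per N w" "(\<Sum>k\<in>{1..int N}. w k - k) = 0" using w unfolding affS_alt by auto
  have inj: "inj w" using bw(1) bij_is_inj by blast
  have sm: "a < b \<Longrightarrow> w a < w b" for a b
    using no_inv_mono[OF N bw(2) z, of a b] inj_eq[OF inj, of a b] by force
  have succ: "w (k + 1) = w k + 1" for k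
  proof -
    obtain p where p: "w p = w k + 1" using surjD[OF bij_is_surj[OF bw(1)], of "w k + 1"] by metis
    have "k < p"
    proof (rule ccontr)
      assume "\<not> k < p"
      then have "p = k \<or> p < k" by linarith
      then show False using sm[of p k] p by auto
    qed
    moreover have "\<not> k + 1 < p"
    proof
      assume "k + 1 < p"
      then have "w (k+1) < w p" by (rule sm)
      moreover have "w k < w (k+1)" by (rule sm) simp
      ultimately show False using p by linarith
    qed
    ultimately have "p = k + 1" by simp
    then show ?thesis using p by simp
  qed
  have lin: "w k = k + w 0" for k
  proof (induction k rule: int_induct[where k = 0])
    case base then show ?case by simp
  next
    case (step1 i) then show ?case using succ[of i] by simp
  next
    case (step2 i) then show ?case using succ[of "i - 1"] by simp
  qed
  define c where "c = w 0"
  have lin': "w k = k + c" for k using lin[of k] unfolding c_def .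
  have "(\<Sum>k\<in>{1..int N}. w k - k) = int N * c" using lin' by simp
  then have "c = 0" using bw(3) N by simp
  then show ?thesis using lin' by (auto simp: fun_eq_iff)
qed

lemma descent_exists:
  assumes pw: "per N w" "N > 0" and pos: "invn N w > 0"
  shows "\<exists>i<N. w (int i + 1) < w (int i)"
proof -
  obtain a b where ab: "(a,b) \<in> invs N w 0" using pos unfolding invn_def
    by (metis card.empty ex_in_conv less_irrefl surj_pair)
  then have ab': "a < b" "w b < w a" unfolding invs_def by auto
  have IND: "\<forall>a. a < a + 1 + int d \<longrightarrow> w (a + 1 + int d) < w a \<longrightarrow> (\<exists>c. w (c + 1) < w c)" for d :: nat
  proof (induction d)
    case 0 then show ?case by auto
  next
    case (Suc d)
    show ?case
    proof (intro allI impI)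
      fix a assume h: "a < a + 1 + int (Suc d)" "w (a + 1 + int (Suc d)) < w a"
      show "\<exists>c. w (c + 1) < w c"
      proof (cases "w (a + 1) < w a")
        case True then show ?thesis by blast
      next
        case False
        then have "w ((a + 1) + 1 + int d) < w (a + 1)" using h by (simp add: algebra_simps)
        then show ?thesis using Suc[rule_format, of "a + 1"] by simp
      qed
    qed
  qed
  moreover define d where "d = nat (b - a - 1)"
  moreover have "b = a + 1 + int d" using ab' unfolding d_def by simp
  ultimately have "a < a + 1 + int d" "w (a + 1 + int d) < w a" using ab' by auto
  then obtain c where c: "w (c + 1) < w c" using IND[of d, rule_format, of a] by blast
  define i where "i = nat (c mod int N)"
  define t where "t = c div int N"
  have ci: "int i = c mod int N" unfolding i_def using pw(2) by simp
  have c2: "c = int i + t * int N" "c + 1 = (int i + 1) + t * int N" unfolding ci t_def by simp_all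
  have "i < N" unfolding i_def using pw(2) by (simp add: nat_less_iff)
  moreover have "w (int i + 1) < w (int i)"
  proof -
    have "w c = w (int i) + t * int N" unfolding c2(1) by (rule per_mult[OF pw(1)])
    moreover have "w (c + 1) = w (int i + 1) + t * int N" unfolding c2(2) by (rule per_mult[OF pw(1)])
    ultimately show ?thesis using c by simp
  qed
  ultimately show ?thesis by blast
qed

lemma words_exist:
  assumes N: "N \<ge> 2"
  shows "w \<in> affS N \<Longrightarrow> \<exists>ws. set ws \<subseteq> {..<N} \<and> word_perm N ws = w \<and> length ws = invn N w"
proof (induction "invn N w" arbitrary: w)
  case 0
  then have "w = id" using inv0_id[OF N] by simp
  then show ?case using 0 by (intro exI[of _ "[]"]) (simp add: word_perm_nil)
next
  case (Suc k)
  have N0: "N > 0" using N by simp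
  have bw: "bij w" "per N w" using Suc.prems unfolding affS_alt by auto
  obtain i where i: "i < N" "w (int i + 1) < w (int i)"
    using descent_exists[OF bw(2) N0] Suc.hyps(2) by auto
  let ?w' = "w \<circ> s_gen N i"
  have w': "?w' \<in> affS N" by (rule affS_step[OF N i(1) Suc.prems])
  have "int (invn N ?w') = int (invn N w) - 1"
    using invn_step[OF N i(1) bw(2) bij_is_inj[OF bw(1)]] i(2) by simp
  then have "invn N ?w' = k" using Suc.hyps(2) by simp
  then obtain ws where ws: "set ws \<subseteq> {..<N}" "word_perm N ws = ?w'" "length ws = k"
    using Suc.hyps(1)[OF _ w'] by metis
  have "word_perm N (ws @ [i]) = w"
    unfolding word_perm_snoc ws(2) using s_gen_invol[OF N i(1)] by (auto simp: fun_eq_iff)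
  then show ?case using ws i(1) Suc.hyps(2) by (intro exI[of _ "ws @ [i]"]) simp
qed

lemma words_props:
  assumes N: "N \<ge> 2"
  shows "set ws \<subseteq> {..<N} \<Longrightarrow> word_perm N ws \<in> affS N \<and> invn N (word_perm N ws) \<le> length ws
         \<and> (invn N (word_perm N ws) = length ws \<longrightarrow> HF (word_perm N ws) (word_f N ws))"
proof (induction ws rule: rev_induct)
  case Nil
  have "id \<in> affS N" unfolding affS_alt by (simp add: per_def)
  moreover have "invs N id 0 = {}" unfolding invs_def by auto
  then have "invn N id = 0" unfolding invn_def by simp
  moreover have "invn N id \<le> length ([]::nat list)" using \<open>invn N id = 0\<close> by simp
  ultimately show ?case unfolding word_perm_nil word_f_nil using HF_id by blast
next
  case (snoc x ws)
  let ?w = "word_perm N ws"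
  have x: "x < N" using snoc.prems by auto
  have IH: "?w \<in> affS N" "invn N ?w \<le> length ws" "invn N ?w = length ws \<longrightarrow> HF ?w (word_f N ws)"
    using snoc by auto
  have bw: "bij ?w" "per N ?w" using IH(1) unfolding affS_alt by auto
  have st: "int (invn N (?w \<circ> s_gen N x)) = int (invn N ?w) + (if ?w (int x) < ?w (int x + 1) then 1 else -1)"
    by (rule invn_step[OF N x bw(2) bij_is_inj[OF bw(1)]])
  have a: "word_perm N (ws @ [x]) \<in> affS N" unfolding word_perm_snoc by (rule affS_step[OF N x IH(1)])
  have b: "invn N (word_perm N (ws @ [x])) \<le> length (ws @ [x])"
    unfolding word_perm_snoc using st IH(2) by (auto split: if_splits)
  have c: "HF (word_perm N (ws @ [x])) (word_f N (ws @ [x]))" if eq: "invn N (word_perm N (ws @ [x])) = length (ws @ [x])"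
  proof -
    have asc: "?w (int x) < ?w (int x + 1)" using eq st IH(2) unfolding word_perm_snoc by (auto split: if_splits)
    have "invn N ?w = length ws" using eq st asc unfolding word_perm_snoc by simp
    then have "HF ?w (word_f N ws)" using IH(3) by simp
    then show ?thesis unfolding word_perm_snoc word_f_snoc by (rule HF_step[OF N x bw(2) asc])
  qed
  show ?case using a b c by blast
qed

lemma aff_length_eq:
  assumes N: "N \<ge> 2" and w: "w \<in> affS N"
  shows "aff_length N w = invn N w"
  unfolding aff_length_def
proof (rule Least_equality)
  show "\<exists>ws. length ws = invn N w \<and> set ws \<subseteq> {..<N} \<and> word_perm N ws = w"
    using words_exist[OF N w] by blast
next
  fix k assume "\<exists>ws. length ws = k \<and> set ws \<subseteq> {..<N} \<and> word_perm N ws = w"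
  then obtain ws where ws: "length ws = k" "set ws \<subseteq> {..<N}" "word_perm N ws = w" by blast
  then show "invn N w \<le> k" using words_props[OF N ws(2)] by simp
qed

lemma HF_P_hecke:
  assumes N: "N \<ge> 2" and w: "w \<in> affS N"
  shows "HF w (P_hecke N w)"
proof -
  have ex: "\<exists>ws. reduced_word N w ws"
    using words_exist[OF N w] aff_length_eq[OF N w] unfolding reduced_word_def by metis
  define ws where "ws = (SOME ws. reduced_word N w ws)"
  have r: "reduced_word N w ws" unfolding ws_def by (rule someI_ex[OF ex])
  then have r': "set ws \<subseteq> {..<N}" "word_perm N ws = w" "length ws = invn N w"
    unfolding reduced_word_def using aff_length_eq[OF N w] by auto
  have "HF w (word_f N ws)" using words_props[OF N r'(1)] r'(2,3) by simp
  then show ?thesis unfolding P_hecke_def ws_def .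
qed

lemma P_hecke_iff:
  assumes N: "N \<ge> 2" and w: "w \<in> affS N"
  shows "P_hecke N w = g \<longleftrightarrow> HF w g"
  using HF_P_hecke[OF N w] HF_unique by metis

definition Vs :: "(int \<Rightarrow> int) \<Rightarrow> int set" where "Vs g = {j. g j < g (j+1)}"

lemma HF_V: assumes "HF w g" "j \<in> Vs g" shows "w (g j) = j"
proof -
  have m: "mono g" and a: "j \<le> w (g j)" and b: "g (w (g j)) \<le> g j" using assms(1) unfolding HF_def by auto
  have "w (g j) < j + 1"
  proof (rule ccontr)
    assume "\<not> w (g j) < j + 1"
    then have "j + 1 \<le> w (g j)" by simp
    then have "g (j+1) \<le> g (w (g j))" by (rule monoD[OF m])
    then show False using b assms(2) unfolding Vs_def by simp
  qed
  then show ?thesis using a by simp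
qed

lemma HF_nR: assumes "HF w g" "inj w" "p \<notin> g ` Vs g" shows "w p \<notin> Vs g"
proof
  assume "w p \<in> Vs g"
  then have "w (g (w p)) = w p" by (rule HF_V[OF assms(1)])
  then have "g (w p) = p" using assms(2) by (simp add: inj_eq)
  then show False using assms(3) \<open>w p \<in> Vs g\<close> by force
qed

lemma HF_notmax: assumes "HF w g" "inj w" "w p \<notin> Vs g" shows "\<exists>c<p. w p < w c"
proof -
  let ?u = "w p"
  have m: "mono g" and g1: "\<And>p. g (w p) \<le> p" and g2: "\<And>j. j \<le> w (g j)" using assms(1) unfolding HF_def by auto
  have "g ?u \<le> g (?u + 1)" by (rule monoD[OF m]) simp
  then have e: "g (?u + 1) = g ?u" using assms(3) unfolding Vs_def by simp
  have le: "g ?u \<le> p" by (rule g1)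
  have ne: "g ?u \<noteq> p"
  proof
    assume "g ?u = p"
    then have "?u + 1 \<le> w p" using g2[of "?u + 1"] e by simp
    then show False by simp
  qed
  have "?u \<le> w (g ?u)" by (rule g2)
  moreover have "w (g ?u) \<noteq> ?u" using ne assms(2) by (simp add: inj_eq)
  ultimately show ?thesis using le ne by (intro exI[of _ "g ?u"]) auto
qed

lemma HF_incr:
  assumes "HF w g" "inj w" "avoids321 w" "a < b" "a \<notin> g ` Vs g" "b \<notin> g ` Vs g"
  shows "w a < w b"
proof -
  have "w a \<notin> Vs g" by (rule HF_nR[OF assms(1,2,5)])
  then obtain c where c: "c < a" "w a < w c" using HF_notmax[OF assms(1,2)] by blast
  have "\<not> w b < w a" using assms(3,4) c unfolding avoids321_def by blast
  moreover have "w a \<noteq> w b" using assms(2,4) by (auto simp: inj_eq)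
  ultimately show ?thesis by simp
qed

lemma HF_onto: assumes "HF w g" "surj w" "x \<notin> Vs g" shows "\<exists>p. p \<notin> g ` Vs g \<and> w p = x"
proof -
  obtain p where p: "x = w p" using surjD[OF assms(2)] by blast
  have "p \<notin> g ` Vs g"
  proof
    assume "p \<in> g ` Vs g"
    then obtain j where j: "j \<in> Vs g" "p = g j" by blast
    then have "w p = j" using HF_V[OF assms(1)] by simp
    then show False using j p assms(3) by simp
  qed
  then show ?thesis using p by blast
qed

lemma no_mixed:
  assumes h1: "HF w1 g" "bij w1" "avoids321 w1" and h2: "HF w2 g" "bij w2" "avoids321 w2"
    and q: "q < q'" "q \<notin> g ` Vs g" "q' \<notin> g ` Vs g" "w1 q < w2 q" "w2 q' < w1 q'"
  shows False
proof -
  let ?Q = "- g ` Vs g"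
  let ?I = "?Q \<inter> {q..q'}"
  have i1: "inj w1" "surj w1" using h1(2) bij_is_inj bij_is_surj by auto
  have i2: "inj w2" "surj w2" using h2(2) bij_is_inj bij_is_surj by auto
  have img: "w ` ?I = (- Vs g) \<inter> {w q..w q'}" if h: "HF w g" "inj w" "surj w" "avoids321 w" for w
  proof (rule set_eqI, rule iffI)
    fix x assume "x \<in> w ` ?I"
    then obtain p where p: "p \<in> ?I" "x = w p" by blast
    have "x \<notin> Vs g" using HF_nR[OF h(1,2)] p by auto
    moreover have "w q \<le> w p" using HF_incr[OF h(1,2,4), of q p] p q by (cases "q = p") auto
    moreover have "w p \<le> w q'" using HF_incr[OF h(1,2,4), of p q'] p q by (cases "p = q'") auto
    ultimately show "x \<in> (- Vs g) \<inter> {w q..w q'}" using p by auto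
  next
    fix x assume x: "x \<in> (- Vs g) \<inter> {w q..w q'}"
    then obtain p where p: "p \<notin> g ` Vs g" "w p = x" using HF_onto[OF h(1,3)] by auto
    have "\<not> p < q" using HF_incr[OF h(1,2,4), of p q] p q x by auto
    moreover have "\<not> q' < p" using HF_incr[OF h(1,2,4), of q' p] p q x by auto
    ultimately show "x \<in> w ` ?I" using p by auto
  qed
  have fin: "finite ?I" by simp
  have c1: "card (w1 ` ?I) = card ?I" using card_image[OF inj_on_subset[OF i1(1)]] by blast
  have c2: "card (w2 ` ?I) = card ?I" using card_image[OF inj_on_subset[OF i2(1)]] by blast
  have sub: "w2 ` ?I \<subseteq> w1 ` ?I - {w1 q}"
    unfolding img[OF h1(1) i1 h1(3)] img[OF h2(1) i2 h2(3)] using q by auto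
  have mem: "w1 q \<in> w1 ` ?I" using q by auto
  have "card (w2 ` ?I) \<le> card (w1 ` ?I - {w1 q})" by (rule card_mono) (use fin sub in auto)
  also have "\<dots> < card (w1 ` ?I)" by (rule card_Diff1_less) (use mem fin in auto)
  finally show False using c1 c2 by simp
qed

lemma per_window_eq:
  assumes "per N w1" "per N w2" "N > 0" "\<And>k. k \<in> {1..int N} \<Longrightarrow> w1 k = w2 k"
  shows "w1 = w2"
proof
  fix x
  define t where "t = (x - 1) div int N"
  define r where "r = (x - 1) mod int N + 1"
  have x: "x = r + t * int N" unfolding r_def t_def by simp
  have r: "r \<in> {1..int N}" unfolding r_def using assms(3) by (simp add: pos_mod_bound add1_zle_eq pos_mod_sign)
  show "w1 x = w2 x" unfolding x per_mult[OF assms(1)] per_mult[OF assms(2)] using assms(4)[OF r] by simp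
qed

lemma sum_le_eq:
  assumes "w1 \<in> affS N" "w2 \<in> affS N" "N > 0" "\<And>k. w1 k \<le> w2 k"
  shows "w1 = w2"
proof -
  have a: "per N w1" "(\<Sum>k\<in>{1..int N}. w1 k - k) = 0" using assms(1) unfolding affS_alt by auto
  have b: "per N w2" "(\<Sum>k\<in>{1..int N}. w2 k - k) = 0" using assms(2) unfolding affS_alt by auto
  have "(\<Sum>k\<in>{1..int N}. w2 k - w1 k) = (\<Sum>k\<in>{1..int N}. w2 k - k) - (\<Sum>k\<in>{1..int N}. w1 k - k)"
    by (simp add: sum_subtractf[symmetric])
  then have z: "(\<Sum>k\<in>{1..int N}. w2 k - w1 k) = 0" using a b by simp
  have "\<forall>k\<in>{1..int N}. w2 k - w1 k = 0"
    using sum_nonneg_eq_0_iff[of "{1..int N}" "\<lambda>k. w2 k - w1 k"] z assms(4) by simp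
  then show ?thesis using per_window_eq[OF a(1) b(1) assms(3)] by simp
qed

lemma uniqueness:
  assumes N: "N \<ge> 2"
    and h1: "w1 \<in> affS N" "HF w1 g" "avoids321 w1" and h2: "w2 \<in> affS N" "HF w2 g" "avoids321 w2"
  shows "w1 = w2"
proof -
  have N0: "N > 0" using N by simp
  have b1: "bij w1" and b2: "bij w2" using h1(1) h2(1) unfolding affS_alt by auto
  have R: "w1 p = w2 p" if "p \<in> g ` Vs g" for p
    using that HF_V[OF h1(2)] HF_V[OF h2(2)] by auto
  show ?thesis
  proof (cases "\<forall>k. w1 k \<le> w2 k")
    case True then show ?thesis using sum_le_eq[OF h1(1) h2(1) N0] by blast
  next
    case F1: False
    show ?thesis
    proof (cases "\<forall>k. w2 k \<le> w1 k")
      case True then show ?thesis using sum_le_eq[OF h2(1) h1(1) N0] by (metis)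
    next
      case False
      then obtain q where q: "w1 q < w2 q" by (metis not_le)
      obtain q' where q': "w2 q' < w1 q'" using F1 by (metis not_le)
      have qQ: "q \<notin> g ` Vs g" "q' \<notin> g ` Vs g" using R q q' by force+
      have "q \<noteq> q'" using q q' by auto
      then consider "q < q'" | "q' < q" by linarith
      then show ?thesis
      proof cases
        case 1 then show ?thesis using no_mixed[OF h1(2) b1 h1(3) h2(2) b2 h2(3) 1 qQ q q'] by simp
      next
        case 2 then show ?thesis using no_mixed[OF h2(2) b2 h2(3) h1(2) b1 h1(3) 2 qQ(2,1) q' q] by simp
      qed
    qed
  qed
qed

lemma ivt_int:
  fixes a b :: int
  assumes "a \<le> b" "\<not> P a" "P b"
  shows "\<exists>m. a \<le> m \<and> m < b \<and> \<not> P m \<and> P (m + 1)"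
proof -
  have "\<forall>a. \<not> P a \<longrightarrow> P (a + int d) \<longrightarrow> (\<exists>m. a \<le> m \<and> m < a + int d \<and> \<not> P m \<and> P (m + 1))" for d :: nat
  proof (induction d)
    case 0 then show ?case by simp
  next
    case (Suc d)
    show ?case
    proof (intro allI impI)
      fix a assume h: "\<not> P a" "P (a + int (Suc d))"
      show "\<exists>m. a \<le> m \<and> m < a + int (Suc d) \<and> \<not> P m \<and> P (m + 1)"
      proof (cases "P (a + 1)")
        case True then show ?thesis using h by (intro exI[of _ a]) simp
      next
        case False
        have "P ((a + 1) + int d)" using h(2) by (simp add: algebra_simps)
        then obtain m where "a + 1 \<le> m" "m < a + 1 + int d" "\<not> P m" "P (m + 1)"
          using Suc.IH False by blast
        then show ?thesis by (intro exI[of _ m]) simp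
      qed
    qed
  qed
  from this[of "nat (b - a)", rule_format, of a] assms show ?thesis by simp
qed

lemma le_div_iff_int:
  fixes t y n :: int assumes "n > 0" shows "t \<le> y div n \<longleftrightarrow> t * n \<le> y"
proof
  assume "t \<le> y div n"
  then have "t * n \<le> (y div n) * n" using assms by (simp add: mult_right_mono)
  also have "\<dots> \<le> y" using assms by (metis add_le_cancel_left div_mult_mod_eq pos_mod_sign add.right_neutral)
  finally show "t * n \<le> y" .
next
  assume h: "t * n \<le> y"
  have "y < (y div n + 1) * n" using assms
    by (metis add.commute distrib_left div_mult_mod_eq mult.commute mult.right_neutral pos_mod_bound add_less_cancel_left)
  then have "t * n < (y div n + 1) * n" using h by linarith
  then have "t < y div n + 1" using assms by (simp add: mult_less_cancel_right)
  then show "t \<le> y div n" by simp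
qed

definition cnt :: "int set \<Rightarrow> int \<Rightarrow> int" where
  "cnt S x = int (card (S \<inter> {1..x})) - int (card (S \<inter> {x+1..0}))"

lemma cnt0: "cnt S 0 = 0" unfolding cnt_def by simp

lemma cnt_step: "cnt S (x + 1) = cnt S x + (if x + 1 \<in> S then 1 else 0)"
proof (cases "x \<ge> 0")
  case True
  have a: "{1..x+1} = insert (x+1) {1..x}" using True by auto
  have b: "{x+1..0} = {}" "{x+1+1..0} = {}" using True by auto
  show ?thesis unfolding cnt_def a b by (cases "x + 1 \<in> S") (auto simp: Int_insert_left)
next
  case False
  have a: "{1..x+1} = {}" "{1..x} = {}" using False by auto
  have b: "{x+1..0} = insert (x+1) {x+1+1..0}" using False by auto
  have fin: "finite (S \<inter> {x+1+1..0})" by simp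
  show ?thesis unfolding cnt_def a b
    by (cases "x + 1 \<in> S") (auto simp: Int_insert_left card_insert_if fin)
qed

lemma cnt_diff:
  assumes "x \<le> y" shows "cnt S y - cnt S x = int (card (S \<inter> {x+1..y}))"
proof -
  have "cnt S (x + int d) - cnt S x = int (card (S \<inter> {x+1..x + int d}))" for d :: nat
  proof (induction d)
    case 0 then show ?case by simp
  next
    case (Suc d)
    have e: "{x+1..x + int (Suc d)} = insert (x + int d + 1) {x+1..x + int d}" by auto
    have f: "finite (S \<inter> {x+1..x + int d})" by simp
    have "cnt S (x + int (Suc d)) = cnt S (x + int d) + (if x + int d + 1 \<in> S then 1 else 0)"
      using cnt_step[of S "x + int d"] by (simp add: algebra_simps)
    then show ?case unfolding e using Suc f by (auto simp: Int_insert_left card_insert_if)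
  qed
  from this[of "nat (y - x)"] assms show ?thesis by simp
qed

lemma cnt_mono: "x \<le> y \<Longrightarrow> cnt S x \<le> cnt S y"
  using cnt_diff[of x y S] by simp

lemma cnt_strict: assumes "x < y" "y \<in> S" shows "cnt S x < cnt S y"
proof -
  have "y \<in> S \<inter> {x+1..y}" using assms by auto
  then have "card (S \<inter> {x+1..y}) > 0" by (auto simp: card_gt_0_iff)
  then show ?thesis using cnt_diff[of x y S] assms by simp
qed

lemma cnt_le_iff: assumes "u \<in> S" shows "u \<le> x \<longleftrightarrow> cnt S u \<le> cnt S x"
  using cnt_mono[of u x S] cnt_strict[of x u S] assms by force

lemma cnt_inj: assumes "u \<in> S" "v \<in> S" "cnt S u = cnt S v" shows "u = v"
  using cnt_le_iff[OF assms(1), of v] cnt_le_iff[OF assms(2), of u] assms(3) by simp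

lemma cnt_compl: "cnt S x + cnt (- S) x = x"
proof (induction x rule: int_induct[where k = 0])
  case base then show ?case by (simp add: cnt0)
next
  case (step1 i) then show ?case using cnt_step[of S i] cnt_step[of "-S" i] by auto
next
  case (step2 i)
  then show ?case using cnt_step[of S "i - 1"] cnt_step[of "-S" "i - 1"] by (auto split: if_splits)
qed

lemma cnt_nonpos: "x \<le> 0 \<Longrightarrow> cnt S x \<le> 0"
  using cnt_mono[of x 0 S] by (simp add: cnt0)

lemma cnt_pos: "u \<in> S \<Longrightarrow> 0 < u \<Longrightarrow> 0 < cnt S u"
  using cnt_strict[of 0 u S] by (simp add: cnt0)

definition perS :: "nat \<Rightarrow> int set \<Rightarrow> bool" where
  "perS N S \<longleftrightarrow> (\<forall>x. x \<in> S \<longleftrightarrow> x + int N \<in> S)"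

lemma cnt_per:
  assumes "perS N S" shows "cnt S (x + int N) = cnt S x + cnt S (int N)"
proof (induction x rule: int_induct[where k = 0])
  case base then show ?case by (simp add: cnt0)
next
  case (step1 i)
  have "i + 1 \<in> S \<longleftrightarrow> i + 1 + int N \<in> S" using assms unfolding perS_def by blast
  then show ?case using step1 cnt_step[of S i] cnt_step[of S "i + int N"] by (simp add: algebra_simps)
next
  case (step2 i)
  have "i \<in> S \<longleftrightarrow> i + int N \<in> S" using assms unfolding perS_def by blast
  then show ?case using step2 cnt_step[of S "i - 1"] cnt_step[of S "i - 1 + int N"] by (simp add: algebra_simps)
qed

lemma cnt_per_mult:
  assumes "perS N S" shows "cnt S (t * int N) = t * cnt S (int N)"
proof (induction t rule: int_induct[where k = 0])
  case base then show ?case by (simp add: cnt0)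
next
  case (step1 i) then show ?case using cnt_per[OF assms, of "i * int N"] by (simp add: algebra_simps)
next
  case (step2 i) then show ?case using cnt_per[OF assms, of "(i - 1) * int N"] by (simp add: algebra_simps)
qed

lemma cnt_surj:
  assumes "perS N S" "cnt S (int N) > 0"
  shows "\<exists>u\<in>S. cnt S u = n"
proof -
  let ?c = "cnt S (int N)"
  define a where "a = (- (\<bar>n\<bar> + 1)) * int N"
  define b where "b = \<bar>n\<bar> * int N"
  have ca: "cnt S a = (- (\<bar>n\<bar> + 1)) * ?c" unfolding a_def by (rule cnt_per_mult[OF assms(1)])
  have cb: "cnt S b = \<bar>n\<bar> * ?c" unfolding b_def by (rule cnt_per_mult[OF assms(1)])
  have "(\<bar>n\<bar> + 1) * 1 \<le> (\<bar>n\<bar> + 1) * ?c" using assms(2) by (intro mult_left_mono) auto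
  then have "(\<bar>n\<bar> + 1) \<le> (\<bar>n\<bar> + 1) * ?c" by simp
  moreover have "- \<bar>n\<bar> \<le> n" by simp
  moreover have "cnt S a = - ((\<bar>n\<bar> + 1) * ?c)" using ca by (simp add: algebra_simps)
  ultimately have a1: "cnt S a < n" by linarith
  have "\<bar>n\<bar> * 1 \<le> \<bar>n\<bar> * ?c" using assms(2) by (intro mult_left_mono) auto
  then have "\<bar>n\<bar> \<le> \<bar>n\<bar> * ?c" by simp
  moreover have "n \<le> \<bar>n\<bar>" by simp
  ultimately have b1: "n \<le> cnt S b" using cb by linarith
  have ab: "a \<le> b" unfolding a_def b_def by (simp add: mult_right_mono)
  obtain m where m: "\<not> n \<le> cnt S m" "n \<le> cnt S (m + 1)"
    using ivt_int[of a b "\<lambda>x. n \<le> cnt S x"] ab a1 b1 by auto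
  have "cnt S (m + 1) = n" "m + 1 \<in> S" using m cnt_step[of S m] by (auto split: if_splits)
  then show ?thesis by blast
qed

locale gctx =
  fixes N :: nat and g :: "int \<Rightarrow> int"
  assumes N2: "N \<ge> 2" and reg: "\<And>i. g i \<le> i" and gm: "mono g" and gp: "per N g"
begin

abbreviation "V \<equiv> Vs g"
abbreviation "R \<equiv> g ` Vs g"

lemma N0: "N > 0" using N2 by simp

lemma gmono: "x \<le> y \<Longrightarrow> g x \<le> g y" using gm by (rule monoD)

lemma gbound: "\<exists>C. \<forall>x. x - C \<le> g x"
proof -
  obtain C where C: "\<And>x. \<bar>g x - x\<bar> \<le> C" using per_bound[OF gp N0] by blast
  have "x - C \<le> g x" for x using C[of x] by (simp add: abs_le_iff)
  then show ?thesis by blast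
qed

lemma cross: "\<exists>m. g m \<le> p \<and> p < g (m + 1)"
proof -
  obtain C where C: "\<And>x. x - C \<le> g x" using gbound by blast
  have C0: "C \<ge> 0" using C[of 0] reg[of 0] by simp
  have "p \<le> p + C + 1" using C0 by simp
  moreover have "\<not> p < g p" using reg[of p] by simp
  moreover have "p < g (p + C + 1)" using C[of "p + C + 1"] by simp
  ultimately obtain m where "\<not> p < g m" "p < g (m + 1)"
    using ivt_int[of p "p + C + 1" "\<lambda>x. p < g x"] by blast
  then show ?thesis by (intro exI[of _ m]) simp
qed

lemma cross_V: "g m \<le> p \<Longrightarrow> p < g (m + 1) \<Longrightarrow> m \<in> V"
  unfolding Vs_def by simp

lemma cross_char: assumes "g m \<le> p" "p < g (m + 1)" shows "j \<le> m \<longleftrightarrow> g j \<le> p"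
proof
  assume "j \<le> m" then show "g j \<le> p" using gmono[of j m] assms by simp
next
  assume h: "g j \<le> p"
  show "j \<le> m"
  proof (rule ccontr)
    assume "\<not> j \<le> m" then have "m + 1 \<le> j" by simp
    then have "g (m + 1) \<le> g j" by (rule gmono)
    then show False using h assms by simp
  qed
qed

lemma V_strict: assumes "j \<in> V" "j < j'" shows "g j < g j'"
proof -
  have "g j < g (j + 1)" using assms(1) unfolding Vs_def by simp
  moreover have "g (j + 1) \<le> g j'" using assms(2) by (intro gmono) simp
  ultimately show ?thesis by simp
qed

lemma inj_V: "inj_on g V"
proof (rule inj_onI)
  fix x y assume "x \<in> V" "y \<in> V" "g x = g y"
  then show "x = y" using V_strict[of x y] V_strict[of y x] by (cases "x < y"; cases "y < x") auto
qed

lemma gper: "g (x + int N) = g x + int N" using gp unfolding per_def by simp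

lemma V_per: "perS N V"
  unfolding perS_def Vs_def
proof (intro allI)
  fix x
  have "g (x + int N + 1) = g (x + 1) + int N" using gper[of "x + 1"] by (simp add: algebra_simps)
  then show "(x \<in> {j. g j < g (j + 1)}) = (x + int N \<in> {j. g j < g (j + 1)})" using gper[of x] by simp
qed

lemma R_per: "perS N R"
  unfolding perS_def
proof (intro allI iffI)
  fix x assume "x \<in> R"
  then obtain j where j: "j \<in> V" "x = g j" by blast
  then have "j + int N \<in> V" using V_per unfolding perS_def by blast
  moreover have "x + int N = g (j + int N)" using j gper by simp
  ultimately show "x + int N \<in> R" by blast
next
  fix x assume "x + int N \<in> R"
  then obtain j where j: "j \<in> V" "x + int N = g j" by blast
  have "j - int N \<in> V \<longleftrightarrow> (j - int N) + int N \<in> V" using V_per unfolding perS_def by blast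
  then have "j - int N \<in> V" using j(1) by simp
  moreover have "x = g (j - int N)" using j gper[of "j - int N"] by simp
  ultimately show "x \<in> R" by blast
qed

lemma compl_per: "perS N S \<Longrightarrow> perS N (- S)" unfolding perS_def by auto

definition A0set where "A0set = {j \<in> V. g j \<le> 0 \<and> 0 < j}"
definition A0 where "A0 = card A0set"

lemma A0_fin: "finite A0set"
proof -
  obtain C where C: "\<And>x. x - C \<le> g x" using gbound by blast
  have CC: "j \<le> C" if "g j \<le> 0" for j using C[of j] that by linarith
  have "A0set \<subseteq> {1..C}" unfolding A0set_def using CC by auto
  then show ?thesis by (rule finite_subset) simp
qed

lemma card_R_part:
  "card (R \<inter> {a..b}) = card {j \<in> V. a \<le> g j \<and> g j \<le> b}"
proof -
  have "R \<inter> {a..b} = g ` {j \<in> V. a \<le> g j \<and> g j \<le> b}" by auto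
  moreover have "inj_on g {j \<in> V. a \<le> g j \<and> g j \<le> b}" using inj_V by (rule inj_on_subset) auto
  ultimately show ?thesis by (simp add: card_image)
qed

lemma key_identity:
  assumes m: "g m \<le> p" "p < g (m + 1)"
  shows "cnt V m - cnt R p = int A0"
proof -
  obtain C where C: "\<And>x. x - C \<le> g x" using gbound by blast
  have CC: "j \<le> C" if "g j \<le> 0" for j using C[of j] that by linarith
  have RR: "1 \<le> j" if "1 \<le> g j" for j using reg[of j] that by linarith
  have RR0: "g j \<le> 0" if "j \<le> 0" for j using reg[of j] that by linarith
  note ch = cross_char[OF m]
  have r1: "{j \<in> V. 1 \<le> g j \<and> g j \<le> p} = {j \<in> V. 1 \<le> g j \<and> j \<le> m}" using ch by auto
  have ch2: "(p + 1 \<le> g j) = (m < j)" for j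
  proof -
    have "(\<not> g j \<le> p) = (\<not> j \<le> m)" using ch[of j] by simp
    then show ?thesis by (simp add: not_le add1_zle_eq)
  qed
  have r2: "{j \<in> V. p + 1 \<le> g j \<and> g j \<le> 0} = {j \<in> V. m < j \<and> g j \<le> 0}"
    unfolding ch2 ..
  have cR: "cnt R p = int (card {j \<in> V. 1 \<le> g j \<and> j \<le> m}) - int (card {j \<in> V. m < j \<and> g j \<le> 0})"
    unfolding cnt_def card_R_part r1 r2 ..
  have cV: "cnt V m = int (card {j \<in> V. 1 \<le> j \<and> j \<le> m}) - int (card {j \<in> V. m + 1 \<le> j \<and> j \<le> 0})"
    unfolding cnt_def by (simp add: Int_def conj_commute)
  have f1: "finite {j \<in> V. m < j \<and> g j \<le> 0}"
  proof -
    have "{j \<in> V. m < j \<and> g j \<le> 0} \<subseteq> {m..C}" using CC by auto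
    then show ?thesis by (rule finite_subset) simp
  qed
  have f2: "finite {j \<in> V. 1 \<le> g j \<and> j \<le> m}"
    by (rule finite_subset[of _ "{1..m}"]) (use RR in auto)
  show ?thesis
  proof (cases "m \<ge> 0")
    case True
    have e0: "{j \<in> V. m + 1 \<le> j \<and> j \<le> 0} = {}" using True by auto
    have e1: "{j \<in> V. 1 \<le> j \<and> j \<le> m} = {j \<in> V. 1 \<le> g j \<and> j \<le> m} \<union> {j \<in> A0set. j \<le> m}"
    proof (rule set_eqI)
      fix x show "x \<in> {j \<in> V. 1 \<le> j \<and> j \<le> m} \<longleftrightarrow> x \<in> {j \<in> V. 1 \<le> g j \<and> j \<le> m} \<union> {j \<in> A0set. j \<le> m}"
        using RR[of x] by (cases "1 \<le> g x") (auto simp: A0set_def)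
    qed
    have d1: "{j \<in> V. 1 \<le> g j \<and> j \<le> m} \<inter> {j \<in> A0set. j \<le> m} = {}" unfolding A0set_def by auto
    have e2: "A0set = {j \<in> A0set. j \<le> m} \<union> {j \<in> V. m < j \<and> g j \<le> 0}"
    proof (rule set_eqI)
      fix x show "x \<in> A0set \<longleftrightarrow> x \<in> {j \<in> A0set. j \<le> m} \<union> {j \<in> V. m < j \<and> g j \<le> 0}"
        using True by (cases "x \<le> m") (auto simp: A0set_def)
    qed
    have d2: "{j \<in> A0set. j \<le> m} \<inter> {j \<in> V. m < j \<and> g j \<le> 0} = {}" by auto
    have fa: "finite {j \<in> A0set. j \<le> m}" using A0_fin by simp
    have "card {j \<in> V. 1 \<le> j \<and> j \<le> m} = card {j \<in> V. 1 \<le> g j \<and> j \<le> m} + card {j \<in> A0set. j \<le> m}"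
      unfolding e1 by (rule card_Un_disjoint[OF f2 fa d1])
    moreover have "A0 = card {j \<in> A0set. j \<le> m} + card {j \<in> V. m < j \<and> g j \<le> 0}"
      unfolding A0_def by (subst e2) (rule card_Un_disjoint[OF fa f1 d2])
    ultimately show ?thesis unfolding cR cV e0 by simp
  next
    case False
    have e0: "{j \<in> V. 1 \<le> j \<and> j \<le> m} = {}" "{j \<in> V. 1 \<le> g j \<and> j \<le> m} = {}"
      using False by (auto dest: RR)
    have e1: "{j \<in> V. m < j \<and> g j \<le> 0} = {j \<in> V. m + 1 \<le> j \<and> j \<le> 0} \<union> A0set"
    proof (rule set_eqI)
      fix x show "x \<in> {j \<in> V. m < j \<and> g j \<le> 0} \<longleftrightarrow> x \<in> {j \<in> V. m + 1 \<le> j \<and> j \<le> 0} \<union> A0set"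
        using False RR0[of x] by (cases "x \<le> 0") (auto simp: A0set_def)
    qed
    have d1: "{j \<in> V. m + 1 \<le> j \<and> j \<le> 0} \<inter> A0set = {}" unfolding A0set_def by auto
    have "card {j \<in> V. m < j \<and> g j \<le> 0} = card {j \<in> V. m + 1 \<le> j \<and> j \<le> 0} + A0"
      unfolding e1 A0_def by (rule card_Un_disjoint[OF _ A0_fin d1]) simp
    then show ?thesis unfolding cR cV e0 by simp
  qed
qed

end

lemma perS_mult: assumes "perS N S" shows "x + t * int N \<in> S \<longleftrightarrow> x \<in> S"
proof (induction t rule: int_induct[where k = 0])
  case base then show ?case by simp
next
  case (step1 i)
  have "x + i * int N \<in> S \<longleftrightarrow> x + i * int N + int N \<in> S" using assms unfolding perS_def by blast
  then show ?case using step1 by (simp add: algebra_simps)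
next
  case (step2 i)
  have "x + (i - 1) * int N \<in> S \<longleftrightarrow> x + (i - 1) * int N + int N \<in> S" using assms unfolding perS_def by blast
  then show ?case using step2 by (simp add: algebra_simps)
qed

lemma cnt_N_pos:
  assumes "perS N S" "N > 0" "u \<in> S" shows "cnt S (int N) > 0"
proof -
  define r where "r = (u - 1) mod int N + 1"
  define t where "t = - ((u - 1) div int N)"
  have dm: "(u - 1) div int N * int N + (u - 1) mod int N = u - 1" by (rule div_mult_mod_eq)
  have ru: "r = u + t * int N" unfolding r_def t_def using dm by (simp add: algebra_simps)
  have rS: "r \<in> S" using perS_mult[OF assms(1), of u t] assms(3) ru by simp
  have r: "0 < r" "r \<le> int N" unfolding r_def using assms(2) by (simp_all add: pos_mod_bound add1_zle_eq pos_mod_sign)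
  have "0 < cnt S r" by (rule cnt_pos[OF rS r(1)])
  also have "\<dots> \<le> cnt S (int N)" by (rule cnt_mono[OF r(2)])
  finally show ?thesis .
qed

locale gctx2 = gctx +
  assumes Une: "\<exists>u. u \<notin> Vs g"
begin

abbreviation "U \<equiv> - Vs g"
abbreviation "Q \<equiv> - g ` Vs g"

lemma U_per: "perS N U" using compl_per[OF V_per] .
lemma Q_per: "perS N Q" using compl_per[OF R_per] .

lemma cV_cR: "cnt V (int N) = cnt R (int N)"
proof -
  obtain m where m: "g m \<le> 0" "0 < g (m + 1)" using cross by blast
  have m': "g (m + int N) \<le> 0 + int N" "0 + int N < g (m + int N + 1)"
    using m gper[of m] gper[of "m + 1"] by (simp_all add: algebra_simps)
  have "cnt V m - cnt R 0 = int A0" by (rule key_identity[OF m])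
  moreover have "cnt V (m + int N) - cnt R (0 + int N) = int A0" by (rule key_identity[OF m'])
  moreover have "cnt V (m + int N) = cnt V m + cnt V (int N)" by (rule cnt_per[OF V_per])
  moreover have "cnt R (0 + int N) = cnt R 0 + cnt R (int N)" by (rule cnt_per[OF R_per])
  ultimately show ?thesis by simp
qed

lemma cU_cQ: "cnt U (int N) = cnt Q (int N)"
  using cnt_compl[of V "int N"] cnt_compl[of R "int N"] cV_cR by simp

lemma cU_pos: "cnt U (int N) > 0"
  using Une cnt_N_pos[OF U_per N0] by blast

lemma cQ_pos: "cnt Q (int N) > 0" using cU_pos cU_cQ by simp

definition wq :: "int \<Rightarrow> int" where
  "wq q = (THE u. u \<in> U \<and> cnt U u = cnt Q q - int A0)"

lemma wq_prop: "wq q \<in> U \<and> cnt U (wq q) = cnt Q q - int A0"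
proof -
  have ex: "\<exists>!u. u \<in> U \<and> cnt U u = cnt Q q - int A0"
  proof -
    obtain u where "u \<in> U" "cnt U u = cnt Q q - int A0" using cnt_surj[OF U_per cU_pos] by blast
    moreover have "\<And>v. v \<in> U \<Longrightarrow> cnt U v = cnt Q q - int A0 \<Longrightarrow> v = u"
      using calculation cnt_inj[of _ U u] by auto
    ultimately show ?thesis by blast
  qed
  show ?thesis unfolding wq_def by (rule theI'[OF ex])
qed

lemma wq_eqI: "u \<in> U \<Longrightarrow> cnt U u = cnt Q q - int A0 \<Longrightarrow> wq q = u"
  using wq_prop[of q] cnt_inj[of "wq q" U u] by simp

definition wf :: "int \<Rightarrow> int" where
  "wf x = (if x \<in> R then the_inv_into V g x else wq x)"

lemma wf_R: "j \<in> V \<Longrightarrow> wf (g j) = j"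
  unfolding wf_def using the_inv_into_f_f[OF inj_V] by auto

lemma wf_Q: "q \<notin> R \<Longrightarrow> wf q = wq q"
  unfolding wf_def by simp

lemma notR_lt: assumes "q \<notin> R" shows "g q < q"
proof (rule ccontr)
  assume "\<not> g q < q"
  then have gq: "g q = q" using reg[of q] by simp
  obtain m where m: "g m \<le> q" "q < g (m + 1)" using cross by blast
  have "q \<le> m" using cross_char[OF m, of q] gq by simp
  then have "g q \<le> g m" by (rule gmono)
  then have "g m = q" using m gq by simp
  moreover have "m \<in> V" by (rule cross_V[OF m])
  ultimately show False using assms by blast
qed

lemma constraint: assumes "q \<notin> R" shows "g (wq q) < q"
proof -
  define p where "p = q - 1"
  obtain m where m: "g m \<le> p" "p < g (m + 1)" using cross by blast
  have ki: "cnt V m - cnt R p = int A0" by (rule key_identity[OF m])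
  have "g q \<le> p" using notR_lt[OF assms] unfolding p_def by simp
  then have qm: "q \<le> m" using cross_char[OF m, of q] by simp
  have cQ: "cnt Q q = q - cnt R q" using cnt_compl[of R q] by simp
  have cR: "cnt R q = cnt R p" using cnt_step[of R p] assms unfolding p_def by simp
  have cU: "cnt U m = m - cnt V m" using cnt_compl[of V m] by simp
  have u: "wq q \<in> U" "cnt U (wq q) = cnt Q q - int A0" using wq_prop by auto
  have "cnt U (wq q) \<le> cnt U m" using u(2) cQ cR cU ki qm by simp
  then have "wq q \<le> m" using cnt_le_iff[OF u(1)] by simp
  then have "g (wq q) \<le> g m" by (rule gmono)
  then show ?thesis using m unfolding p_def by simp
qed

lemma wf_per: "wf (x + int N) = wf x + int N"
proof (cases "x \<in> R")
  case True
  then obtain j where j: "j \<in> V" "x = g j" by blast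
  have "j + int N \<in> V" using V_per j(1) unfolding perS_def by blast
  moreover have "x + int N = g (j + int N)" using j gper by simp
  ultimately show ?thesis using wf_R j by simp
next
  case False
  have xN: "x + int N \<notin> R" using R_per False unfolding perS_def by blast
  have u: "wq x \<in> U" "cnt U (wq x) = cnt Q x - int A0" using wq_prop by auto
  have "wq x + int N \<in> U" using U_per u(1) unfolding perS_def by blast
  moreover have "cnt U (wq x + int N) = cnt Q (x + int N) - int A0"
    using cnt_per[OF U_per, of "wq x"] cnt_per[OF Q_per, of x] u(2) cU_cQ by simp
  ultimately have "wq (x + int N) = wq x + int N" by (rule wq_eqI)
  then show ?thesis using wf_Q False xN by simp
qed

lemma wf_inj: "inj wf"
proof (rule injI)
  fix x y assume e: "wf x = wf y"
  show "x = y"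
  proof (cases "x \<in> R")
    case xR: True
    then obtain j where j: "j \<in> V" "x = g j" by blast
    show ?thesis
    proof (cases "y \<in> R")
      case True
      then obtain j' where j': "j' \<in> V" "y = g j'" by blast
      then show ?thesis using e j wf_R by simp
    next
      case False
      then have "wf y \<in> U" using wf_Q wq_prop by simp
      moreover have "wf x \<in> V" using wf_R j by simp
      ultimately show ?thesis using e by simp
    qed
  next
    case xQ: False
    show ?thesis
    proof (cases "y \<in> R")
      case True
      then obtain j' where j': "j' \<in> V" "y = g j'" by blast
      have "wf x \<in> U" using wf_Q wq_prop xQ by simp
      moreover have "wf y \<in> V" using wf_R j' by simp
      ultimately show ?thesis using e by simp
    next
      case False
      have "cnt U (wq x) = cnt U (wq y)" using e wf_Q xQ False by simp
      then have "cnt Q x = cnt Q y" using wq_prop[of x] wq_prop[of y] by simp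
      then show ?thesis using cnt_inj[of x Q y] xQ False by simp
    qed
  qed
qed

lemma wf_surj: "surj wf"
proof -
  have "y \<in> range wf" for y
  proof (cases "y \<in> V")
    case True then show ?thesis using wf_R[of y] by (metis rangeI)
  next
    case False
    obtain q where q: "q \<in> Q" "cnt Q q = cnt U y + int A0" using cnt_surj[OF Q_per cQ_pos] by blast
    have "wq q = y" by (rule wq_eqI) (use False q in auto)
    then show ?thesis using wf_Q q(1) by (metis ComplD rangeI)
  qed
  then show ?thesis by blast
qed

lemma wf_HF: "HF wf g"
  unfolding HF_def
proof (intro conjI allI)
  show "mono g" by (rule gm)
next
  fix p show "g (wf p) \<le> p"
  proof (cases "p \<in> R")
    case True then obtain j where "j \<in> V" "p = g j" by blast
    then show ?thesis using wf_R by simp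
  next
    case False then show ?thesis using wf_Q constraint[OF False] by simp
  qed
next
  fix j
  obtain m where m: "g m \<le> g j" "g j < g (m + 1)" using cross by blast
  have jm: "j \<le> m" using cross_char[OF m, of j] by simp
  have "g j \<le> g m" using jm by (rule gmono)
  then have "g m = g j" using m by simp
  moreover have "m \<in> V" by (rule cross_V[OF m])
  ultimately have "wf (g j) = m" using wf_R[of m] by simp
  then show "j \<le> wf (g j)" using jm by simp
qed

lemma HF_lt_notR:
  assumes "HF w g" "a < b" "w b < w a" shows "b \<notin> R"
proof
  assume "b \<in> R"
  then obtain j where j: "j \<in> V" "b = g j" by blast
  have wb: "w b = j" using HF_V[OF assms(1) j(1)] j by simp
  have "g (w a) \<le> a" using assms(1) unfolding HF_def by auto
  moreover have "j + 1 \<le> w a" using assms(3) wb by simp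
  then have "g (j + 1) \<le> g (w a)" by (rule gmono)
  ultimately have "g (j + 1) \<le> a" by simp
  moreover have "g j < g (j + 1)" using j(1) unfolding Vs_def by simp
  ultimately show False using assms(2) j(2) by simp
qed

lemma wf_321: "avoids321 wf"
  unfolding avoids321_def
proof
  assume "\<exists>a b c. a < b \<and> b < c \<and> wf b < wf a \<and> wf c < wf b"
  then obtain a b c where h: "a < b" "b < c" "wf b < wf a" "wf c < wf b" by blast
  have b: "b \<notin> R" by (rule HF_lt_notR[OF wf_HF h(1,3)])
  have c: "c \<notin> R" by (rule HF_lt_notR[OF wf_HF h(2,4)])
  have "cnt Q b < cnt Q c" using cnt_strict[of b c Q] h(2) c by simp
  then have "cnt U (wf b) < cnt U (wf c)" using wq_prop wf_Q b c by simp
  moreover have "wf c \<in> U" using wq_prop wf_Q c by simp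
  ultimately have "wf b < wf c" using cnt_le_iff[of "wf c" U "wf b"] by linarith
  then show False using h(4) by simp
qed

end

lemma negdiv:
  fixes x n :: int assumes "n > 0" shows "(- x) div n = - ((x - 1) div n) - 1"
proof -
  define q where "q = (x - 1) div n"
  define r where "r = (x - 1) mod n"
  have x: "x - 1 = q * n + r" unfolding q_def r_def by simp
  have r: "0 \<le> r" "r < n" unfolding r_def using assms by simp_all
  have "- x = (n - r - 1) + (- q - 1) * n" using x by (simp add: algebra_simps)
  then have "(- x) div n = (- q - 1) + (n - r - 1) div n" using assms by simp
  also have "(n - r - 1) div n = 0" using r by simp
  finally show ?thesis unfolding q_def by simp
qed

lemma win_eq:
  fixes k k' s :: int
  assumes "k \<in> {1..int N}" "k' \<in> {1..int N}" "k = k' + s * int N"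
  shows "s = 0"
proof (rule ccontr)
  assume "s \<noteq> 0"
  then consider "s \<ge> 1" | "s \<le> -1" by linarith
  then show False
  proof cases
    case 1
    then have "1 * int N \<le> s * int N" by (intro mult_right_mono) auto
    then show False using assms by simp
  next
    case 2
    then have "s * int N \<le> (-1) * int N" by (intro mult_right_mono) auto
    then show False using assms by simp
  qed
qed

lemma win_decomp:
  assumes "N > 0"
  obtains k q where "k \<in> {1..int N}" "a = k + q * int N"
proof -
  define q where "q = (a - 1) div int N"
  define k where "k = (a - 1) mod int N + 1"
  have "a = k + q * int N" unfolding q_def k_def using div_mult_mod_eq[of "a - 1" "int N"] by (simp add: algebra_simps)
  moreover have "k \<in> {1..int N}" unfolding k_def using assms by (simp add: pos_mod_bound add1_zle_eq pos_mod_sign)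
  ultimately show ?thesis using that by blast
qed

lemma residue_sum:
  assumes N0: "N > 0" and bw: "bij w" and pw: "per N w"
  shows "(\<Sum>k\<in>{1..int N}. (w k - 1) mod int N) = (\<Sum>k\<in>{1..int N}. k - 1)"
proof -
  let ?W = "{1..int N}"
  define \<rho> where "\<rho> k = (w k - 1) mod int N + 1" for k
  have into: "\<rho> ` ?W \<subseteq> ?W" unfolding \<rho>_def using N0 by (auto simp: pos_mod_bound add1_zle_eq pos_mod_sign)
  have inj: "inj_on \<rho> ?W"
  proof (rule inj_onI)
    fix k k' assume kk: "k \<in> ?W" "k' \<in> ?W" "\<rho> k = \<rho> k'"
    then have "(w k - 1) mod int N = (w k' - 1) mod int N" unfolding \<rho>_def by simp
    then have "int N dvd (w k - 1) - (w k' - 1)" by (simp add: mod_eq_dvd_iff)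
    then obtain s where s: "w k - w k' = int N * s" by (auto elim: dvdE)
    have "w k = w (k' + s * int N)" using per_mult[OF pw, of k' s] s by (simp add: algebra_simps)
    then have "k = k' + s * int N" using bij_is_inj[OF bw] by (simp add: inj_eq)
    then have "s = 0" using win_eq[OF kk(1,2)] by simp
    then show "k = k'" using \<open>k = k' + s * int N\<close> by simp
  qed
  have "\<rho> ` ?W = ?W" by (rule endo_inj_surj[OF _ into inj]) simp
  then have B: "bij_betw \<rho> ?W ?W" using inj unfolding bij_betw_def by simp
  have "(\<Sum>k\<in>?W. (w k - 1) mod int N) = (\<Sum>k\<in>?W. \<rho> k - 1)" unfolding \<rho>_def by simp
  also have "\<dots> = (\<Sum>k\<in>?W. k - 1)" by (rule sum.reindex_bij_betw[OF B, of "\<lambda>k. k - 1"])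
  finally show ?thesis .
qed

definition Aset :: "(int \<Rightarrow> int) \<Rightarrow> int set" where "Aset w = {a. a \<le> 0 \<and> 0 < w a}"
definition Bset :: "(int \<Rightarrow> int) \<Rightarrow> int set" where "Bset w = {a. 0 < a \<and> w a \<le> 0}"

lemma card_A_B:
  assumes N0: "N > 0" and pw: "per N w"
  shows "int (card (Aset w)) - int (card (Bset w)) = (\<Sum>k\<in>{1..int N}. (w k - 1) div int N)"
proof -
  let ?W = "{1..int N}"
  define Ak where "Ak k = {t. 1 \<le> t \<and> t * int N \<le> w k - 1}" for k
  define Bk where "Bk k = {t. 0 \<le> t \<and> w k + t * int N \<le> 0}" for k
  have Ak: "Ak k = {1..(w k - 1) div int N}" for k
  proof (rule set_eqI)
    fix t show "t \<in> Ak k \<longleftrightarrow> t \<in> {1..(w k - 1) div int N}"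
      unfolding Ak_def using le_div_iff_int[of "int N" t "w k - 1"] N0 by simp
  qed
  have Bk: "Bk k = {0..(- w k) div int N}" for k
  proof -
    have "w k + t * int N \<le> 0 \<longleftrightarrow> t \<le> (- w k) div int N" for t
      using le_div_iff_int[of "int N" t "- w k"] N0 by linarith
    then show ?thesis unfolding Bk_def by (simp add: set_eq_iff)
  qed
  have disj: "\<And>k k' t t'. k \<in> ?W \<Longrightarrow> k' \<in> ?W \<Longrightarrow> k - t * int N = k' - t' * int N \<Longrightarrow> k = k'"
  proof -
    fix k k' t t' assume h: "k \<in> ?W" "k' \<in> ?W" "k - t * int N = k' - t' * int N"
    then have "k = k' + (t - t') * int N" by (simp add: algebra_simps)
    then have "t - t' = 0" by (rule win_eq[OF h(1,2)])
    then show "k = k'" using h(3) by simp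
  qed
  have disj2: "\<And>k k' t t'. k \<in> ?W \<Longrightarrow> k' \<in> ?W \<Longrightarrow> k + t * int N = k' + t' * int N \<Longrightarrow> k = k'"
    using disj[of _ _ "- _" "- _"] by simp
  have Aeq: "Aset w = (\<Union>k\<in>?W. (\<lambda>t. k - t * int N) ` Ak k)"
  proof (rule set_eqI, rule iffI)
    fix a assume a: "a \<in> Aset w"
    obtain k q where kq: "k \<in> ?W" "a = k + q * int N" using win_decomp[OF N0] by blast
    have "q \<le> -1"
    proof (rule ccontr)
      assume "\<not> q \<le> -1" then have "0 * int N \<le> q * int N" by (intro mult_right_mono) auto
      then show False using a kq unfolding Aset_def by simp
    qed
    moreover have "w a = w k + q * int N" unfolding kq(2) by (rule per_mult[OF pw])
    ultimately have "- q \<in> Ak k" using a unfolding Aset_def Ak_def by simp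
    then show "a \<in> (\<Union>k\<in>?W. (\<lambda>t. k - t * int N) ` Ak k)" using kq by force
  next
    fix a assume "a \<in> (\<Union>k\<in>?W. (\<lambda>t. k - t * int N) ` Ak k)"
    then obtain k t where kt: "k \<in> ?W" "t \<in> Ak k" "a = k - t * int N" by blast
    have "1 * int N \<le> t * int N" using kt(2) unfolding Ak_def by (intro mult_right_mono) auto
    then have tN: "int N \<le> t * int N" by simp
    have "k \<le> int N" using kt(1) by simp
    then have a0: "a \<le> 0" using kt(3) tN by linarith
    have t2: "t * int N \<le> w k - 1" using kt(2) unfolding Ak_def by simp
    have "w a = w k + (- t) * int N" unfolding kt(3) using per_mult[OF pw, of k "- t"] by simp
    then have "0 < w a" using t2 by simp
    then show "a \<in> Aset w" using a0 unfolding Aset_def by simp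
  qed
  have Beq: "Bset w = (\<Union>k\<in>?W. (\<lambda>t. k + t * int N) ` Bk k)"
  proof (rule set_eqI, rule iffI)
    fix a assume a: "a \<in> Bset w"
    obtain k q where kq: "k \<in> ?W" "a = k + q * int N" using win_decomp[OF N0] by blast
    have "q \<ge> 0"
    proof (rule ccontr)
      assume "\<not> q \<ge> 0" then have "q * int N \<le> (-1) * int N" by (intro mult_right_mono) auto
      then show False using a kq unfolding Bset_def by simp
    qed
    moreover have "w a = w k + q * int N" unfolding kq(2) by (rule per_mult[OF pw])
    ultimately have "q \<in> Bk k" using a unfolding Bset_def Bk_def by simp
    then show "a \<in> (\<Union>k\<in>?W. (\<lambda>t. k + t * int N) ` Bk k)" using kq by force
  next
    fix a assume "a \<in> (\<Union>k\<in>?W. (\<lambda>t. k + t * int N) ` Bk k)"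
    then obtain k t where kt: "k \<in> ?W" "t \<in> Bk k" "a = k + t * int N" by blast
    have "0 * int N \<le> t * int N" using kt(2) unfolding Bk_def by (intro mult_right_mono) auto
    then have tN: "0 \<le> t * int N" by simp
    have "1 \<le> k" using kt(1) by simp
    then have a0: "0 < a" using kt(3) tN by linarith
    have "w a = w k + t * int N" unfolding kt(3) by (rule per_mult[OF pw])
    then have "w a \<le> 0" using kt(2) unfolding Bk_def by simp
    then show "a \<in> Bset w" using a0 unfolding Bset_def by simp
  qed
  have injA: "inj_on (\<lambda>t. k - t * int N) S" for k S using N0 by (auto simp: inj_on_def)
  have injB: "inj_on (\<lambda>t. k + t * int N) S" for k S using N0 by (auto simp: inj_on_def)
  have cA: "card (Aset w) = (\<Sum>k\<in>?W. card (Ak k))"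
  proof -
    have "card (Aset w) = (\<Sum>k\<in>?W. card ((\<lambda>t. k - t * int N) ` Ak k))"
      unfolding Aeq
    proof (rule card_UN_disjoint)
      show "\<forall>k\<in>?W. finite ((\<lambda>t. k - t * int N) ` Ak k)" unfolding Ak by simp
      show "\<forall>k\<in>?W. \<forall>k'\<in>?W. k \<noteq> k' \<longrightarrow> (\<lambda>t. k - t * int N) ` Ak k \<inter> (\<lambda>t. k' - t * int N) ` Ak k' = {}"
        using disj by blast
    qed simp
    also have "\<dots> = (\<Sum>k\<in>?W. card (Ak k))" by (simp add: card_image[OF injA])
    finally show ?thesis .
  qed
  have cB: "card (Bset w) = (\<Sum>k\<in>?W. card (Bk k))"
  proof -
    have "card (Bset w) = (\<Sum>k\<in>?W. card ((\<lambda>t. k + t * int N) ` Bk k))"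
      unfolding Beq
    proof (rule card_UN_disjoint)
      show "\<forall>k\<in>?W. finite ((\<lambda>t. k + t * int N) ` Bk k)" unfolding Bk by simp
      show "\<forall>k\<in>?W. \<forall>k'\<in>?W. k \<noteq> k' \<longrightarrow> (\<lambda>t. k + t * int N) ` Bk k \<inter> (\<lambda>t. k' + t * int N) ` Bk k' = {}"
        using disj2 by blast
    qed simp
    also have "\<dots> = (\<Sum>k\<in>?W. card (Bk k))" by (simp add: card_image[OF injB])
    finally show ?thesis .
  qed
  have each: "int (card (Ak k)) - int (card (Bk k)) = (w k - 1) div int N" for k
  proof -
    define M where "M = (w k - 1) div int N"
    have "(- w k) div int N + 1 = - M" unfolding M_def using negdiv[of "int N" "w k"] N0 by simp
    then have "card (Bk k) = nat (- M)" unfolding Bk by simp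
    moreover have "card (Ak k) = nat M" unfolding Ak M_def by simp
    ultimately show ?thesis unfolding M_def[symmetric] by simp
  qed
  have "int (card (Aset w)) - int (card (Bset w)) = (\<Sum>k\<in>?W. int (card (Ak k)) - int (card (Bk k)))"
    unfolding cA cB by (simp add: sum_subtractf)
  also have "\<dots> = (\<Sum>k\<in>?W. (w k - 1) div int N)" using each by simp
  finally show ?thesis .
qed

lemma cross_sum:
  assumes N0: "N > 0" and bw: "bij w" and pw: "per N w"
  shows "(\<Sum>k\<in>{1..int N}. w k - k) = int N * (int (card (Aset w)) - int (card (Bset w)))"
proof -
  let ?W = "{1..int N}"
  have e: "w k - k = int N * ((w k - 1) div int N) + ((w k - 1) mod int N) - (k - 1)" for k
    using div_mult_mod_eq[of "w k - 1" "int N"] by (simp add: algebra_simps)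
  have "(\<Sum>k\<in>?W. w k - k) = (\<Sum>k\<in>?W. int N * ((w k - 1) div int N) + ((w k - 1) mod int N) - (k - 1))"
    by (rule sum.cong[OF refl e])
  also have "\<dots> = (\<Sum>k\<in>?W. int N * ((w k - 1) div int N)) + (\<Sum>k\<in>?W. (w k - 1) mod int N) - (\<Sum>k\<in>?W. k - 1)"
    by (simp only: sum_subtractf sum.distrib)
  also have "\<dots> = int N * (\<Sum>k\<in>?W. (w k - 1) div int N) + (\<Sum>k\<in>?W. (w k - 1) mod int N) - (\<Sum>k\<in>?W. k - 1)"
    by (simp only: sum_distrib_left)
  also have "\<dots> = int N * (\<Sum>k\<in>?W. (w k - 1) div int N)" using residue_sum[OF assms] by simp
  also have "\<dots> = int N * (int (card (Aset w)) - int (card (Bset w)))" using card_A_B[OF N0 pw] by simp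
  finally show ?thesis .
qed

context gctx2
begin

lemma Aset_wf: "Aset wf = g ` A0set"
proof (rule set_eqI, rule iffI)
  fix x assume x: "x \<in> Aset wf"
  show "x \<in> g ` A0set"
  proof (cases "x \<in> R")
    case True
    then obtain j where j: "j \<in> V" "x = g j" by blast
    then have "wf x = j" using wf_R by simp
    then have "j \<in> A0set" using x j unfolding Aset_def A0set_def by simp
    then show ?thesis using j by blast
  next
    case False
    have "cnt Q x \<le> 0" using x unfolding Aset_def by (simp add: cnt_nonpos)
    then have "cnt U (wq x) \<le> 0" using wq_prop[of x] by simp
    moreover have "0 < cnt U (wq x)" using cnt_pos[of "wq x" U] wq_prop[of x] x wf_Q[OF False]
      unfolding Aset_def by simp
    ultimately show ?thesis by simp
  qed
next
  fix x assume "x \<in> g ` A0set"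
  then obtain j where j: "j \<in> A0set" "x = g j" by blast
  then have "j \<in> V" unfolding A0set_def by simp
  then have "wf x = j" using wf_R j by simp
  then show "x \<in> Aset wf" using j unfolding Aset_def A0set_def by simp
qed

lemma card_Aset_wf: "card (Aset wf) = A0"
proof -
  have "inj_on g A0set" using inj_V by (rule inj_on_subset) (auto simp: A0set_def)
  then show ?thesis unfolding Aset_wf A0_def by (rule card_image)
qed

lemma Bset_wf: "Bset wf = {q \<in> Q. 1 \<le> cnt Q q \<and> cnt Q q \<le> int A0}"
proof (rule set_eqI, rule iffI)
  fix x assume x: "x \<in> Bset wf"
  have xQ: "x \<notin> R"
  proof
    assume "x \<in> R"
    then obtain j where j: "j \<in> V" "x = g j" by blast
    then have "wf x = j" using wf_R by simp
    then show False using x j reg[of j] unfolding Bset_def by simp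
  qed
  have "0 < cnt Q x" using cnt_pos[of x Q] x xQ unfolding Bset_def by simp
  moreover have "cnt U (wq x) \<le> cnt U 0" using cnt_mono[of "wq x" 0 U] x wf_Q[OF xQ] unfolding Bset_def by simp
  then have "cnt Q x \<le> int A0" using wq_prop[of x] cnt0[of U] by simp
  ultimately show "x \<in> {q \<in> Q. 1 \<le> cnt Q q \<and> cnt Q q \<le> int A0}" using xQ by simp
next
  fix x assume x: "x \<in> {q \<in> Q. 1 \<le> cnt Q q \<and> cnt Q q \<le> int A0}"
  have x0: "0 < x"
  proof (rule ccontr)
    assume "\<not> 0 < x" then have "cnt Q x \<le> 0" by (simp add: cnt_nonpos)
    then show False using x by simp
  qed
  have xQ: "x \<notin> R" using x by simp
  have "cnt U (wq x) \<le> cnt U 0" using wq_prop[of x] x cnt0[of U] by simp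
  then have "wq x \<le> 0" using cnt_le_iff[of "wq x" U 0] wq_prop[of x] by simp
  then show "x \<in> Bset wf" using x0 wf_Q[OF xQ] unfolding Bset_def by simp
qed

lemma card_Bset_wf: "card (Bset wf) = A0"
proof -
  let ?S = "{q \<in> Q. 1 \<le> cnt Q q \<and> cnt Q q \<le> int A0}"
  have "bij_betw (cnt Q) ?S {1..int A0}"
  proof (rule bij_betw_imageI)
    show "inj_on (cnt Q) ?S" by (rule inj_onI) (use cnt_inj[of _ Q] in auto)
    show "cnt Q ` ?S = {1..int A0}"
    proof (rule set_eqI, rule iffI)
      fix n assume "n \<in> cnt Q ` ?S" then show "n \<in> {1..int A0}" by auto
    next
      fix n assume n: "n \<in> {1..int A0}"
      obtain q where "q \<in> Q" "cnt Q q = n" using cnt_surj[OF Q_per cQ_pos] by blast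
      then show "n \<in> cnt Q ` ?S" using n by force
    qed
  qed
  then have "card ?S = card {1..int A0}" by (rule bij_betw_same_card)
  then show ?thesis unfolding Bset_wf by simp
qed

lemma wf_affS: "wf \<in> affS N"
proof -
  have b: "bij wf" using wf_inj wf_surj by (simp add: bij_def)
  have p: "per N wf" unfolding per_def using wf_per by simp
  have "(\<Sum>k\<in>{1..int N}. wf k - k) = int N * (int (card (Aset wf)) - int (card (Bset wf)))"
    by (rule cross_sum[OF N0 b p])
  then have "(\<Sum>k\<in>{1..int N}. wf k - k) = 0" using card_Aset_wf card_Bset_wf by simp
  then show ?thesis unfolding affS_alt using b p by simp
qed

lemma exists_w: "\<exists>w. w \<in> affS N \<and> HF w g \<and> avoids321 w"
  using wf_affS wf_HF wf_321 by blast

end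

lemma strict_inc_ge:
  fixes g :: "int \<Rightarrow> int"
  assumes "\<And>j. g j < g (j + 1)"
  shows "g a + int k \<le> g (a + int k)"
proof (induction k)
  case 0 then show ?case by simp
next
  case (Suc k)
  have "g (a + int k) < g (a + int k + 1)" by (rule assms)
  then show ?case using Suc by (simp add: algebra_simps)
qed

lemma all_V_shift:
  assumes N: "N \<ge> 2" and gp: "per N g" and allV: "\<And>j. g j < g (j + 1)"
  shows "g = (\<lambda>i. i - (- g 0))"
proof -
  have step: "g (j + 1) = g j + 1" for j
  proof (rule ccontr)
    assume "g (j + 1) \<noteq> g j + 1"
    then have "g j + 2 \<le> g (j + 1)" using allV[of j] by simp
    moreover have "g (j + 1) + int (N - 1) \<le> g (j + 1 + int (N - 1))" by (rule strict_inc_ge[where g=g, OF allV])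
    moreover have "j + 1 + int (N - 1) = j + int N" using N by simp
    moreover have "g (j + int N) = g j + int N" using gp unfolding per_def by simp
    ultimately show False using N by simp
  qed
  define c where "c = g 0"
  have lin: "g k = k + c" for k
  proof (induction k rule: int_induct[where k = 0])
    case base then show ?case unfolding c_def by simp
  next
    case (step1 i) then show ?case using step[of i] by simp
  next
    case (step2 i) then show ?case using step[of "i - 1"] by simp
  qed
  show ?thesis unfolding c_def[symmetric] using lin by (auto simp: fun_eq_iff)
qed

lemma avoids321_id: "avoids321 id" unfolding avoids321_def by auto

lemma existence:
  assumes N: "N \<ge> 2" and g: "g \<in> NDPF1 N"
  shows "\<exists>w. w \<in> affS N \<and> HF w g \<and> avoids321 w"
proof -
  have reg: "\<And>i. g i \<le> i" and gm: "mono g" and gp: "per N g"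
    and ns: "\<not> (\<exists>t. t \<noteq> 0 \<and> g = (\<lambda>i. i - t))"
    using g unfolding NDPF1_def per_def by auto
  interpret gctx N g using N reg gm gp by unfold_locales auto
  show ?thesis
  proof (cases "\<exists>u. u \<notin> Vs g")
    case True
    interpret gctx2 N g using True by unfold_locales
    show ?thesis by (rule exists_w)
  next
    case False
    then have allV: "\<And>j. g j < g (j + 1)" unfolding Vs_def by auto
    have gs: "g = (\<lambda>i. i - (- g 0))" by (rule all_V_shift[OF N gp allV])
    then have "- g 0 = 0" using ns by blast
    then have "g = id" using gs by (auto simp: fun_eq_iff)
    moreover have "id \<in> affS N" unfolding affS_alt by (simp add: per_def)
    ultimately show ?thesis using HF_id avoids321_id by blast
  qed
qed

theorem mainTheorem5:
  fixes N :: nat and g :: "int \<Rightarrow> int"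
  assumes "N \<ge> 2" and "g \<in> NDPF1 N"
  shows "\<exists>!w. w \<in> affS N \<and> P_hecke N w = g \<and> avoids321 w"
proof -
  obtain w where w: "w \<in> affS N" "HF w g" "avoids321 w" using existence[OF assms] by blast
  show ?thesis
  proof (rule ex1I[of _ w])
    show "w \<in> affS N \<and> P_hecke N w = g \<and> avoids321 w" using w P_hecke_iff[OF assms(1) w(1)] by simp
  next
    fix w' assume h: "w' \<in> affS N \<and> P_hecke N w' = g \<and> avoids321 w'"
    then have "HF w' g" using P_hecke_iff[OF assms(1)] by blast
    then show "w' = w" using uniqueness[OF assms(1)] h w by blast
  qed
qed

end
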